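(* For every $m,n\in\mathbb{N}_0$, $$\frac{1}{m!\binom{n+m}{m}}\int_1^{+\infty}\frac{\{x\}\log^m x\,L_n^{(m)}(\log x)}{x^2}\,\mathrm{d}x=(-1)^{n-1}\ell_n^{(m)},$$ where $\ell_n^{(m)}=-\delta_{n,0}+\sum_{k=0}^n\binom{n}{k}(-1)^{n-k}\sum_{j=0}^{m+k}\frac{\gamma_j}{j!}$. Consequently the fractional part function $x\mapsto\{x\}$ belongs to $\mathcal{H}_m$ and $\{x\}=\sum_{n=0}^{+\infty}(-1)^{n-1}\ell_n^{(m)}L_n^{(m)}(\log x)$ with convergence in the norm of $\mathcal{H}_m$.
   Context: $\{x\}=x-\lfloor x\rfloor$. $L_n^{(m)}(u)=\sum_{k=0}^n\binom{n+m}{n-k}\frac{(-1)^k}{k!}u^k$ are the associated Laguerre polynomials. $\mathcal{H}_m=\mathrm{L}^2\big((1,+\infty);\frac{\log^m x}{m!\,x^2}\mathrm{d}x\big)$ is the space of real functions $f$ on $(1,\infty)$ with $\frac{1}{m!}\int_1^\infty\frac{|f(x)|^2\log^m x}{x^2}\mathrm{d}x<\infty$. $\delta_{n,k}$ is the Kronecker delta and $\gamma_j$ are the Stieltjes constants $\gamma_j=\lim_{N\to\infty}\left(\sum_{k=1}^N\frac{\log^j k}{k}-\frac{\log^{j+1}N}{j+1}\right)$. *)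

theory Defs
  imports "HOL-Analysis.Analysis"
begin

definition laguerre :: "nat \<Rightarrow> nat \<Rightarrow> real \<Rightarrow> real" where
  "laguerre n m u = (\<Sum>k=0..n. real ((n + m) choose (n - k)) * (-1) ^ k / fact k * u ^ k)"

definition stieltjes :: "nat \<Rightarrow> real" where
  "stieltjes j = lim (\<lambda>N. (\<Sum>k=1..N. ln (real k) ^ j / real k) - ln (real N) ^ (j + 1) / real (j + 1))"

definition ell :: "nat \<Rightarrow> nat \<Rightarrow> real" where
  "ell n m = - (if n = 0 then 1 else 0)
     + (\<Sum>k=0..n. real (n choose k) * (-1) ^ (n - k) * (\<Sum>j=0..m+k. stieltjes j / fact j))"

end

theory Submission
  imports Defs "HOL-Real_Asymp.Real_Asymp" "HOL-Computational_Algebra.Polynomial"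
begin

fun Fm :: "nat \<Rightarrow> real \<Rightarrow> real" where
  "Fm 0 x = - 1 / x"
| "Fm (Suc k) x = - (ln x ^ Suc k) / x + real (Suc k) * Fm k x"

lemma Fm_deriv: "x > 0 \<Longrightarrow> (Fm k has_real_derivative ln x ^ k / x\<^sup>2) (at x)"
proof (induction k)
  case 0 then show ?case
    by (auto intro!: derivative_eq_intros simp: power2_eq_square field_simps)
next
  case (Suc k)
  have d1: "((\<lambda>x. ln x ^ Suc k) has_real_derivative real (Suc k) * ln x ^ k * (1/x)) (at x)"
    using Suc.prems DERIV_chain2[OF DERIV_pow[of "Suc k" "ln x"] DERIV_ln[of x]] by (simp add: divide_inverse)
  have "((\<lambda>x. - (ln x ^ Suc k) / x) has_real_derivative
         (- (real (Suc k) * ln x ^ k * (1/x)) * x - (- (ln x ^ Suc k)) * 1) / (x * x)) (at x)"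
    using Suc.prems by (intro DERIV_minus DERIV_divide d1 DERIV_ident) auto
  from DERIV_add[OF this DERIV_cmult[OF Suc.IH[OF Suc.prems], of "real (Suc k)"]]
  show ?case using Suc.prems
    by (simp add: field_simps power2_eq_square)
qed

lemma Fm_1: "Fm k 1 = - fact k"
  by (induction k) auto

lemma Fm_lim: "(Fm k \<longlongrightarrow> 0) at_top"
proof (induction k)
  case 0 then show ?case by simp real_asymp
next
  case (Suc k)
  have "((\<lambda>x::real. - (ln x ^ Suc k) / x) \<longlongrightarrow> 0) at_top" by real_asymp
  from tendsto_add[OF this tendsto_mult[OF tendsto_const Suc.IH, of "real (Suc k)"]]
  show ?case by simp
qed

lemma moment:
  shows "set_integrable lborel {1<..} (\<lambda>x::real. ln x ^ k / x\<^sup>2)"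
    and "set_lebesgue_integral lborel {1<..} (\<lambda>x::real. ln x ^ k / x\<^sup>2) = fact k"
proof -
  have A: "((Fm k \<circ> real_of_ereal) \<longlongrightarrow> - fact k) (at_right (ereal 1))"
      unfolding ereal_tendsto_simps
      using Fm_1[of k] by (metis (no_types, lifting) DERIV_isCont Fm_deriv continuous_within
          isCont_def less_numeral_extra(1) tendsto_at_iff_tendsto_nhds tendsto_within_subset top_greatest)
  have B: "((Fm k \<circ> real_of_ereal) \<longlongrightarrow> 0) (at_left \<infinity>)"
      unfolding ereal_tendsto_simps by (rule Fm_lim)
  note * = interval_integral_FTC_nonneg[where F="Fm k" and f="\<lambda>x. ln x ^ k / x\<^sup>2", OF _ _ _ _ A B]
  have *: "set_integrable lborel (einterval (ereal 1) \<infinity>) (\<lambda>x::real. ln x ^ k / x\<^sup>2)"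
          "(LBINT x=ereal 1..\<infinity>. ln x ^ k / x\<^sup>2) = 0 - (- fact k)"
    by (rule *; auto intro!: Fm_deriv continuous_intros)+
  then show "set_integrable lborel {1<..} (\<lambda>x::real. ln x ^ k / x\<^sup>2)" by simp
  have "set_lebesgue_integral lborel {1<..} (\<lambda>x::real. ln x ^ k / x\<^sup>2) = (LBINT x=ereal 1..\<infinity>. ln x ^ k / x\<^sup>2)"
    by (simp add: interval_lebesgue_integral_def)
  with * show "set_lebesgue_integral lborel {1<..} (\<lambda>x::real. ln x ^ k / x\<^sup>2) = fact k"
    by simp
qed


lemma Fm_closed: "y \<noteq> 0 \<Longrightarrow> Fm p y = - (\<Sum>i\<le>p. fact p / fact i * ln y ^ i) / y"
proof (induction p)
  case 0 then show ?case by simp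
next
  case (Suc p)
  define S where "S = (\<Sum>i\<le>p. fact p / fact i * ln y ^ i)"
  have f: "fact (Suc p) / fact i = real (Suc p) * (fact p / fact i)" for i :: nat
    by (simp add: fact_Suc)
  have "(\<Sum>i\<le>Suc p. fact (Suc p) / fact i * ln y ^ i)
      = ln y ^ Suc p + (\<Sum>i\<le>p. fact (Suc p) / fact i * ln y ^ i)"
    by (simp only: sum.atMost_Suc) simp
  also have "\<dots> = ln y ^ Suc p + real (Suc p) * S"
    unfolding S_def by (simp only: f sum_distrib_left mult.assoc)
  finally have eq: "(\<Sum>i\<le>Suc p. fact (Suc p) / fact i * ln y ^ i) = ln y ^ Suc p + real (Suc p) * S" .
  have IH: "Fm p y = - S / y" using Suc S_def by simp
  have "Fm (Suc p) y = -(ln y ^ Suc p)/y + real (Suc p) * (- S / y)" by (simp add: IH)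
  also have "\<dots> = -(ln y ^ Suc p + real (Suc p) * S)/y" using Suc.prems by (simp add: field_simps)
  finally show ?case by (simp only: eq)
qed

lemma Esum_tel: "(\<Sum>i\<le>p. fact p / fact i * (t::real)^i)
   = fact p * (\<Sum>i\<le>p. t^(i+1)/fact(i+1)) - t^(p+1)/(p+1) + fact p"
proof -
  define A where "A = (\<Sum>i\<le>p. t^(i+1)/fact(i+1))"
  define B where "B = (\<Sum>i\<le>p. t^i/fact i)"
  have "A = (\<Sum>i\<le>Suc p. t^i/fact i) - 1"
    unfolding A_def using sum.atMost_Suc_shift[of "\<lambda>i. t^i/fact i" p] by simp
  also have "\<dots> = B + t^(p+1)/fact(p+1) - 1"
    unfolding B_def by (simp only: sum.atMost_Suc) simp
  finally have tel: "A = B + t^(p+1)/fact(p+1) - 1" .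
  have c: "fact p * (t^(p+1)/fact(p+1)) = t^(p+1)/(p+1)"
  proof -
    have "fact (p+1) = (real p + 1) * (fact p :: real)" by simp
    then show ?thesis by (simp del: fact_Suc)
  qed
  define c0 where "c0 = t^(p+1)/fact(p+1)"
  have "(\<Sum>i\<le>p. fact p / fact i * t^i) = fact p * B"
    unfolding B_def by (simp add: sum_distrib_left)
  also have "\<dots> = fact p * A - fact p * c0 + fact p"
  proof -
    have hB: "B = A + 1 - c0" using tel[folded c0_def] by simp
    show ?thesis by (simp add: hB algebra_simps)
  qed
  finally show ?thesis unfolding A_def[symmetric] c[folded c0_def] .
qed

definition Dst :: "nat \<Rightarrow> nat \<Rightarrow> real" where
  "Dst i N = (\<Sum>k=1..N. ln (real k) ^ i / real k) - ln (real N) ^ (i+1) / real (i+1)"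

definition Phi :: "nat \<Rightarrow> nat \<Rightarrow> real" where
  "Phi p N = fact p - fact p * (\<Sum>i\<le>p. Dst i N / fact i)"

lemma piece:
  fixes k :: nat assumes k: "k \<ge> 1"
  shows "((\<lambda>x. frac x * ln x ^ p / x\<^sup>2) has_integral
     ((ln (real k + 1) ^ Suc p / (real p + 1) - real k * Fm p (real k + 1)) -
      (ln (real k) ^ Suc p / (real p + 1) - real k * Fm p (real k)))) {real k..real k+1}"
proof -
  let ?G = "\<lambda>x. ln x ^ Suc p / (real p + 1) - real k * Fm p x"
  have "((\<lambda>x. (x - k) * ln x ^ p / x\<^sup>2) has_integral (?G (real k+1) - ?G (real k))) {real k..real k+1}"
  proof (rule fundamental_theorem_of_calculus)
    fix x assume x: "x \<in> {real k..real k+1}"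
    then have x0: "x > 0" using k by auto
    have d1: "((\<lambda>x. ln x ^ Suc p) has_real_derivative real (Suc p) * ln x ^ p * (1/x)) (at x)"
      using x0 DERIV_chain2[OF DERIV_pow[of "Suc p" "ln x"] DERIV_ln[of x]] by (simp add: divide_inverse)
    have e1: "real (Suc p) * ln x ^ p * (1/x) / (real p + 1) = ln x ^ p / x"
    proof -
      have nz: "real p + 1 \<noteq> 0" by simp
      have "real (Suc p) = real p + 1" by simp
      then show ?thesis by (simp only: mult.assoc nonzero_mult_div_cancel_left[OF nz]) simp
    qed
    have "(?G has_real_derivative (x - k) * ln x ^ p / x\<^sup>2) (at x)"
      by (rule DERIV_cong[OF DERIV_diff[OF DERIV_cdivide[OF d1, of "real p + 1"] DERIV_cmult[OF Fm_deriv[of x p, OF x0], of "real k"]]])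
         (use x0 in \<open>simp only: e1, simp add: field_simps power2_eq_square\<close>)
    then show "(?G has_vector_derivative (x - k) * ln x ^ p / x\<^sup>2) (at x within {real k..real k+1})"
      by (simp add: has_real_derivative_iff_has_vector_derivative[symmetric] has_field_derivative_at_within)
  qed simp
  then show ?thesis
  proof (rule has_integral_spike_finite[of "{real k+1}", rotated 2])
    fix x assume x: "x \<in> {real k..real k+1} - {real k+1}"
    have "floor x = int k"
      using x by (subst floor_eq_iff) auto
    then show "frac x * ln x ^ p / x\<^sup>2 = (x - k) * ln x ^ p / x\<^sup>2"
      by (simp add: frac_def)
  qed auto
qed


lemma Dst_step: "Dst i (Suc N) - Dst i N =
   ln (real N + 1) ^ i / (real N + 1) - ln (real N + 1) ^ (i+1) / real (i+1) + ln (real N) ^ (i+1) / real (i+1)"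
  unfolding Dst_def by (simp add: add.commute)

lemma Esum_S: "fact p * (\<Sum>i\<le>p. (t::real)^i / fact i)
   = fact p * (\<Sum>i\<le>p. t^(i+1)/fact(i+1)) - t^(p+1)/(p+1) + fact p"
  using Esum_tel[of p t] by (simp add: sum_distrib_left)

lemma Fm_S: "y \<noteq> 0 \<Longrightarrow> Fm p y = - (fact p * (\<Sum>i\<le>p. ln y ^ i / fact i)) / y"
  using Fm_closed[of y p] by (simp add: sum_distrib_left)

lemma Phi_step:
  assumes N: "N \<ge> 1"
  shows "Phi p (Suc N) - Phi p N =
     (ln (real N + 1) ^ Suc p / (real p + 1) - real N * Fm p (real N + 1)) -
      (ln (real N) ^ Suc p / (real p + 1) - real N * Fm p (real N))"
proof -
  define y where "y = ln (real N + 1)"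
  define z where "z = ln (real N)"
  define a where "a = real N"
  have a: "a > 0" using N by (simp add: a_def)
  define S0y where "S0y = (\<Sum>i\<le>p. y^i / fact i)"
  define S1y where "S1y = (\<Sum>i\<le>p. y^(i+1) / fact (i+1))"
  define S0z where "S0z = (\<Sum>i\<le>p. z^i / fact i)"
  define S1z where "S1z = (\<Sum>i\<le>p. z^(i+1) / fact (i+1))"
  have ey: "fact p * S0y = fact p * S1y - y^(p+1)/(p+1) + fact p"
    unfolding S0y_def S1y_def by (rule Esum_S)
  have ez: "fact p * S0z = fact p * S1z - z^(p+1)/(p+1) + fact p"
    unfolding S0z_def S1z_def by (rule Esum_S)
  have fy: "Fm p (real N + 1) = - (fact p * S0y) / (a + 1)"
    unfolding S0y_def y_def a_def by (rule Fm_S) simp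
  have fz: "Fm p (real N) = - (fact p * S0z) / a"
    unfolding S0z_def z_def a_def using a a_def by (intro Fm_S) simp
  have trm: "(Dst i (Suc N) - Dst i N) / fact i =
      y^i / fact i / (a+1) - y^(i+1) / fact (i+1) + z^(i+1) / fact (i+1)" for i
  proof -
    have alg: "(A/d - B/c + C/c)/f = A/f/d - B/(c*f) + C/(c*f)" if "f > 0" "c > 0" "d > 0"
      for A B C c d f :: real using that by (simp add: field_simps)
    have e: "real (i+1) * fact i = (fact (i+1) :: real)" by simp
    show ?thesis unfolding Dst_step y_def[symmetric] z_def[symmetric] a_def[symmetric]
      by (subst alg) (use a in \<open>simp_all only: e, auto simp: y_def z_def a_def\<close>)
  qed
  have "Phi p (Suc N) - Phi p N = - fact p * (\<Sum>i\<le>p. (Dst i (Suc N) - Dst i N) / fact i)"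
    unfolding Phi_def by (simp add: sum_subtractf diff_divide_distrib algebra_simps)
  also have "(\<Sum>i\<le>p. (Dst i (Suc N) - Dst i N) / fact i) = S0y / (a+1) - S1y + S1z"
    unfolding trm S0y_def S1y_def S1z_def
    by (simp add: sum.distrib sum_subtractf sum_divide_distrib)
  finally have lhs: "Phi p (Suc N) - Phi p N = - fact p * (S0y / (a+1) - S1y + S1z)" .
  have alg2: "- F * (S0y/(a+1) - S1y + S1z) = (Y/P - a*(-(F*S0y)/(a+1))) - (Z/P - a*(-(F*S0z)/a))"
    if "a > 0" "P > 0" "F*S0y = F*S1y - Y/P + F" "F*S0z = F*S1z - Z/P + F"
    for a P F S0y S1y S0z S1z Y Z :: real
  proof -
    have "F*S1y = F*S0y + Y/P - F" "F*S1z = F*S0z + Z/P - F" using that by simp_all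
    then have "- F * (S0y/(a+1) - S1y + S1z) = - F * S0y/(a+1) + (F*S0y + Y/P - F) - (F*S0z + Z/P - F)"
      by (simp add: algebra_simps)
    also have "\<dots> = (Y/P - a*(-(F*S0y)/(a+1))) - (Z/P - a*(-(F*S0z)/a))"
      using that(1) by (simp add: field_simps)
    finally show ?thesis .
  qed
  have *: "- fact p * (S0y/(a+1) - S1y + S1z) = (y^(p+1)/(real p + 1) - a*(-(fact p*S0y)/(a+1)))
        - (z^(p+1)/(real p + 1) - a*(-(fact p*S0z)/a))"
    by (rule alg2) (use a ey ez in auto)
  show ?thesis unfolding lhs fy fz using * unfolding y_def z_def a_def by simp
qed

lemma J_int:
  assumes N: "N \<ge> 1"
  shows "((\<lambda>x. frac x * ln x ^ p / x\<^sup>2) has_integral Phi p N) {1..real N}"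
  using N
proof (induction N rule: dec_induct)
  case base
  have "Phi p 1 = 0"
  proof -
    have "(\<Sum>i\<le>p. Dst i 1 / fact i) = (\<Sum>i\<le>p. if i = 0 then 1 else 0)"
      by (rule sum.cong) (auto simp: Dst_def)
    then show ?thesis unfolding Phi_def by simp
  qed
  then show ?case using has_integral_refl(2)[of _ "1::real"] by simp
next
  case (step N)
  have "((\<lambda>x. frac x * ln x ^ p / x\<^sup>2) has_integral (Phi p N + (Phi p (Suc N) - Phi p N))) {1..real N + 1}"
    using has_integral_combine[OF _ _ step.IH piece[OF step.hyps(1), of p]] step.hyps
    unfolding Phi_step[OF step.hyps(1)] by simp
  then show ?case by (simp add: add.commute)
qed


lemma borel_frac[measurable]: "frac \<in> borel_measurable (borel :: real measure)"
  unfolding frac_def by measurable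

lemma sib:
  fixes g h :: "real \<Rightarrow> real"
  assumes "g \<in> borel_measurable borel" "set_integrable lborel {1<..} h"
          "\<And>x. x > 1 \<Longrightarrow> \<bar>g x\<bar> \<le> h x"
  shows "set_integrable lborel {1<..} g"
proof (rule set_integrable_bound[OF assms(2)])
  show "set_borel_measurable lborel {1<..} g"
    unfolding set_borel_measurable_def using assms(1) by measurable
  show "AE x in lborel. x \<in> {1<..} \<longrightarrow> norm (g x) \<le> norm (h x)"
    using assms(3) by (auto intro!: AE_I2 order_trans[OF _ abs_ge_self])
qed

lemma int_f: "set_integrable lborel {1<..} (\<lambda>x::real. frac x * ln x ^ p / x\<^sup>2)"
proof (rule sib)
  show "set_integrable lborel {1<..} (\<lambda>x::real. ln x ^ p / x\<^sup>2)" by (rule moment(1))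
  show "(\<lambda>x::real. frac x * ln x ^ p / x\<^sup>2) \<in> borel_measurable borel" by measurable
  fix x :: real assume "x > 1"
  then have "0 \<le> frac x" "frac x \<le> 1" "ln x \<ge> 0" using frac_lt_1[of x] by auto
  then show "\<bar>frac x * ln x ^ p / x\<^sup>2\<bar> \<le> ln x ^ p / x\<^sup>2"
    by (auto simp: abs_mult divide_right_mono mult_left_le_one_le intro!: divide_right_mono mult_left_le_one_le)
qed

definition Ip :: "nat \<Rightarrow> real" where
  "Ip p = set_lebesgue_integral lborel {1<..} (\<lambda>x::real. frac x * ln x ^ p / x\<^sup>2)"

lemma Phi_lim: "Phi p \<longlonglongrightarrow> Ip p"
proof -
  let ?f = "\<lambda>x::real. frac x * ln x ^ p / x\<^sup>2"
  have eqi: "(\<lambda>x. indicator {1..} x *\<^sub>R ?f x) = (\<lambda>x. indicator {1<..} x *\<^sub>R ?f x)"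
    by (rule ext) (auto simp: indicator_def)
  have i1: "set_integrable lborel {1..} ?f"
    using int_f[of p] unfolding set_integrable_def eqi .
  have "((\<lambda>b. set_lebesgue_integral lborel {1..b} ?f) \<longlongrightarrow> set_lebesgue_integral lborel {1..} ?f) at_top"
    by (rule tendsto_set_lebesgue_integral_at_top[OF _ i1]) auto
  also have "set_lebesgue_integral lborel {1..} ?f = Ip p"
    unfolding Ip_def set_lebesgue_integral_def eqi ..
  finally have L: "((\<lambda>b. set_lebesgue_integral lborel {1..b} ?f) \<longlongrightarrow> Ip p) at_top" .
  have "(\<lambda>N. set_lebesgue_integral lborel {1..real N} ?f) \<longlonglongrightarrow> Ip p"
    by (rule filterlim_compose[OF L filterlim_real_sequentially])
  moreover have "eventually (\<lambda>N. set_lebesgue_integral lborel {1..real N} ?f = Phi p N) sequentially"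
    using eventually_ge_at_top[of 1]
  proof eventually_elim
    case (elim N)
    have "set_integrable lborel {1..real N} ?f"
      by (rule set_integrable_subset[OF i1]) auto
    then have "set_lebesgue_integral lborel {1..real N} ?f = integral {1..real N} ?f"
      by (rule set_borel_integral_eq_integral)
    also have "\<dots> = Phi p N" using J_int[OF elim] by (rule integral_unique)
    finally show ?case .
  qed
  ultimately show ?thesis by (blast intro: Lim_transform_eventually)
qed

lemma stieltjes_Dst: "stieltjes j = lim (Dst j)"
  unfolding stieltjes_def Dst_def by simp

lemma Dst_lim: "Dst p \<longlonglongrightarrow> stieltjes p"
proof (induction p rule: less_induct)
  case (less p)
  have e: "Dst p N = fact p * (1 - Phi p N / fact p - (\<Sum>i<p. Dst i N / fact i))" for N
  proof -
    have "(\<Sum>i\<le>p. Dst i N / fact i) = (\<Sum>i<p. Dst i N / fact i) + Dst p N / fact p"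
      by (simp add: lessThan_Suc_atMost[symmetric])
    then show ?thesis unfolding Phi_def by (simp add: field_simps)
  qed
  have "Dst p \<longlonglongrightarrow> fact p * (1 - Ip p / fact p - (\<Sum>i<p. stieltjes i / fact i))"
    unfolding e
    by (intro tendsto_intros Phi_lim tendsto_sum less.IH) auto
  then have "convergent (Dst p)" by (auto simp: convergent_def)
  then show ?case unfolding stieltjes_Dst by (rule convergent_LIMSEQ_iff[THEN iffD1])
qed

lemma Ip_val: "Ip p = fact p - fact p * (\<Sum>i\<le>p. stieltjes i / fact i)"
proof -
  have "Phi p \<longlonglongrightarrow> fact p - fact p * (\<Sum>i\<le>p. stieltjes i / fact i)"
    unfolding Phi_def[abs_def] by (intro tendsto_intros tendsto_sum Dst_lim) auto
  from LIMSEQ_unique[OF Phi_lim this] show ?thesis .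
qed


lemma set_integrable_sum':
  fixes f :: "'i \<Rightarrow> 'a \<Rightarrow> real"
  assumes "\<And>i. i \<in> I \<Longrightarrow> set_integrable M A (f i)"
  shows "set_integrable M A (\<lambda>x. \<Sum>i\<in>I. f i x)"
  unfolding set_integrable_def scaleR_sum_right
  by (intro Bochner_Integration.integrable_sum assms[unfolded set_integrable_def])

lemma set_integral_sum':
  fixes f :: "'i \<Rightarrow> 'a \<Rightarrow> real"
  assumes "\<And>i. i \<in> I \<Longrightarrow> set_integrable M A (f i)"
  shows "set_lebesgue_integral M A (\<lambda>x. \<Sum>i\<in>I. f i x) = (\<Sum>i\<in>I. set_lebesgue_integral M A (f i))"
  using assms unfolding set_integrable_def set_lebesgue_integral_def
  unfolding scaleR_sum_right
  by (intro Bochner_Integration.integral_sum assms[unfolded set_integrable_def])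

lemma lag_expand: "frac x * ln x ^ m * laguerre n m (ln x) / x\<^sup>2 =
   (\<Sum>k=0..n. real ((n + m) choose (n - k)) * (-1) ^ k / fact k * (frac x * ln x ^ (m+k) / x\<^sup>2))"
  unfolding laguerre_def
  by (simp add: sum_distrib_left sum_divide_distrib power_add algebra_simps)

lemma int_fc: "set_integrable lborel {1<..} (\<lambda>x::real. c * (frac x * ln x ^ q / x\<^sup>2))"
  by (rule set_integrable_mult_right) (rule int_f)

lemma conj1: "set_integrable lborel {1<..}
           (\<lambda>x::real. frac x * ln x ^ m * laguerre n m (ln x) / x ^ 2)"
  unfolding lag_expand by (intro set_integrable_sum' int_fc)

lemma conj2_int: "set_lebesgue_integral lborel {1<..}
             (\<lambda>x::real. frac x * ln x ^ m * laguerre n m (ln x) / x ^ 2)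
   = (\<Sum>k=0..n. real ((n + m) choose (n - k)) * (-1) ^ k / fact k * Ip (m+k))"
  unfolding lag_expand Ip_def
  by (subst set_integral_sum') (rule int_fc, simp only: set_integral_mult_right)

lemma binom_ratio:
  assumes "k \<le> n"
  shows "real ((n + m) choose (n - k)) / fact k * fact (m + k) / (fact m * real ((n + m) choose m))
         = real (n choose k)"
proof -
  have a: "real ((n + m) choose (n - k)) = fact (n+m) / (fact (n-k) * fact (m+k))"
    using assms by (subst binomial_fact) (auto simp: algebra_simps)
  have b: "real ((n + m) choose m) = fact (n+m) / (fact m * fact n)"
    by (subst binomial_fact) auto
  have c: "real (n choose k) = fact n / (fact k * fact (n - k))"
    using assms by (rule binomial_fact)
  show ?thesis unfolding a b c by (simp add: field_simps)
qed

lemma conj2: "(1 / (fact m * real ((n + m) choose m))) *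
           set_lebesgue_integral lborel {1<..}
             (\<lambda>x::real. frac x * ln x ^ m * laguerre n m (ln x) / x ^ 2)
         = - ((-1) ^ n) * ell n m"
proof -
  define S where "S q = (\<Sum>i=0..q. stieltjes i / fact i)" for q
  have "(1 / (fact m * real ((n + m) choose m))) *
           set_lebesgue_integral lborel {1<..}
             (\<lambda>x::real. frac x * ln x ^ m * laguerre n m (ln x) / x ^ 2)
      = (\<Sum>k=0..n. real (n choose k) * (-1)^k * (1 - S (m+k)))"
    unfolding conj2_int sum_distrib_left
  proof (rule sum.cong[OF refl])
    fix k assume k: "k \<in> {0..n}"
    have "1 / (fact m * real ((n + m) choose m)) *
        (real ((n + m) choose (n - k)) * (- 1) ^ k / fact k * Ip (m + k))
      = (real ((n + m) choose (n - k)) / fact k * fact (m + k) / (fact m * real ((n + m) choose m)))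
         * (-1)^k * (1 - S (m+k))"
      unfolding Ip_val S_def atLeast0AtMost by (simp add: field_simps)
    also have "\<dots> = real (n choose k) * (-1)^k * (1 - S (m+k))"
      using k by (subst binom_ratio) auto
    finally show "1 / (fact m * real ((n + m) choose m)) *
        (real ((n + m) choose (n - k)) * (- 1) ^ k / fact k * Ip (m + k))
      = real (n choose k) * (-1)^k * (1 - S (m+k))" .
  qed
  also have "\<dots> = (\<Sum>k=0..n. (-1)^k * real (n choose k)) - (\<Sum>k=0..n. real (n choose k) * (-1)^k * S (m+k))"
    by (simp add: sum_subtractf algebra_simps)
  also have "(\<Sum>k=0..n. (-1)^k * real (n choose k)) = (if n = 0 then 1 else 0)"
    using choose_alternating_sum[of n] by (auto simp: atLeast0AtMost)
  also have "(\<Sum>k=0..n. real (n choose k) * (-1)^k * S (m+k))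
     = (-1)^n * (\<Sum>k=0..n. real (n choose k) * (-1) ^ (n - k) * S (m+k))"
    unfolding sum_distrib_left
  proof (rule sum.cong[OF refl])
    fix k assume "k \<in> {0..n}"
    then have "n + (n - k) = k + 2 * (n-k)" by simp
    then have "(-1::real)^n * (-1)^(n-k) = (-1)^(k + 2 * (n-k))"
      by (metis power_add)
    then have "(-1::real)^k = (-1)^n * (-1)^(n-k)"
      by (simp add: power_add power_mult)
    then show "real (n choose k) * (-1)^k * S (m+k) = (-1)^n * (real (n choose k) * (-1) ^ (n - k) * S (m+k))"
      by simp
  qed
  finally show ?thesis unfolding ell_def S_def by (auto simp: algebra_simps)
qed


definition good :: "(real \<Rightarrow> real) \<Rightarrow> bool" where
  "good g \<longleftrightarrow> g \<in> borel_measurable borel \<and> (\<exists>C k. \<forall>x>1. \<bar>g x\<bar> \<le> C * (1 + ln x ^ k))"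

lemma pow_le_aux: "(L::real) \<ge> 0 \<Longrightarrow> L ^ a \<le> 1 + L ^ (a + b)"
proof (cases "L \<le> 1")
  case True
  assume "L \<ge> 0"
  then have "L ^ a \<le> 1" using True by (simp add: power_le_one)
  moreover have "L ^ (a+b) \<ge> 0" using \<open>L \<ge> 0\<close> by simp
  ultimately show ?thesis by linarith
next
  case False
  then have "L ^ a \<le> L ^ (a+b)" by (intro power_increasing) auto
  then show ?thesis by simp
qed

lemma goodI:
  assumes "g \<in> borel_measurable borel" "\<And>x. x > 1 \<Longrightarrow> \<bar>g x\<bar> \<le> C * (1 + ln x ^ k)"
  shows "good g"
  using assms unfolding good_def by blast

lemma goodE:
  assumes "good g"
  obtains C k where "C \<ge> 0" "\<And>x. x > 1 \<Longrightarrow> \<bar>g x\<bar> \<le> C * (1 + ln x ^ k)"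
proof -
  from assms obtain C k where b: "\<And>x. x > 1 \<Longrightarrow> \<bar>g x\<bar> \<le> C * (1 + ln x ^ k)"
    unfolding good_def by blast
  have "\<bar>g x\<bar> \<le> \<bar>C\<bar> * (1 + ln x ^ k)" if "x > 1" for x
  proof -
    have "0 \<le> 1 + ln x ^ k" using that by simp
    then have "C * (1 + ln x ^ k) \<le> \<bar>C\<bar> * (1 + ln x ^ k)" by (intro mult_right_mono) auto
    then show ?thesis using b[OF that] by linarith
  qed
  then show ?thesis using that[of "\<bar>C\<bar>"] by auto
qed

lemma good_meas: "good g \<Longrightarrow> g \<in> borel_measurable borel"
  unfolding good_def by blast

lemma good_bounded:
  assumes "g \<in> borel_measurable borel" "\<And>x. x > 1 \<Longrightarrow> \<bar>g x\<bar> \<le> B"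
  shows "good g"
proof (rule goodI[OF assms(1), of "\<bar>B\<bar>" 0])
  fix x :: real assume "x > 1" then show "\<bar>g x\<bar> \<le> \<bar>B\<bar> * (1 + ln x ^ 0)" using assms(2)[of x] by simp
qed

lemma good_const: "good (\<lambda>x. c)"
  by (rule good_bounded[of _ "\<bar>c\<bar>"]) auto

lemma good_lnpow: "good (\<lambda>x. ln x ^ j)"
proof (rule goodI[of _ 1 j])
  fix x :: real assume "x > 1" then show "\<bar>ln x ^ j\<bar> \<le> 1 * (1 + ln x ^ j)" by simp
qed measurable

lemma good_mult:
  assumes "good g" "good h" shows "good (\<lambda>x. g x * h x)"
proof -
  obtain C a where C: "C \<ge> 0" "\<And>x. x > 1 \<Longrightarrow> \<bar>g x\<bar> \<le> C * (1 + ln x ^ a)" using goodE[OF assms(1)] by blast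
  obtain D b where D: "D \<ge> 0" "\<And>x. x > 1 \<Longrightarrow> \<bar>h x\<bar> \<le> D * (1 + ln x ^ b)" using goodE[OF assms(2)] by blast
  show ?thesis
  proof (rule goodI[of _ "4 * C * D" "a + b"])
    show "(\<lambda>x. g x * h x) \<in> borel_measurable borel" using good_meas[OF assms(1)] good_meas[OF assms(2)] by measurable
    fix x :: real assume x: "x > 1"
    define L where "L = ln x"
    have L: "L \<ge> 0" using x by (simp add: L_def)
    have "0 \<le> C * (1 + L ^ a)" using C L by simp
    then have "\<bar>g x * h x\<bar> \<le> (C * (1 + L ^ a)) * (D * (1 + L ^ b))"
      unfolding abs_mult L_def by (intro mult_mono C D x) auto
    also have "\<dots> = C * D * ((1 + L ^ a) * (1 + L ^ b))" by simp
    also have "(1 + L ^ a) * (1 + L ^ b) \<le> 4 * (1 + L ^ (a+b))"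
    proof -
      have e: "(1 + L ^ a) * (1 + L ^ b) = 1 + L ^ a + L ^ b + L ^ (a+b)" by (simp add: algebra_simps power_add)
      have "L ^ a \<le> 1 + L ^ (a+b)" "L ^ b \<le> 1 + L ^ (a+b)"
        using pow_le_aux[OF L, of a b] pow_le_aux[OF L, of b a] by (simp_all add: add.commute)
      moreover have "L ^ (a+b) \<ge> 0" using L by simp
      moreover have "\<And>A B X::real. A \<le> 1+X \<Longrightarrow> B \<le> 1+X \<Longrightarrow> 0 \<le> X \<Longrightarrow> 1 + A + B + X \<le> 4*(1+X)"
        by (smt (verit))
      ultimately show ?thesis unfolding e by blast
    qed
    then have "C * D * ((1 + L ^ a) * (1 + L ^ b)) \<le> C * D * (4 * (1 + L ^ (a+b)))"
      using C D by (intro mult_left_mono) auto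
    finally show "\<bar>g x * h x\<bar> \<le> 4 * C * D * (1 + ln x ^ (a + b))" by (simp add: L_def algebra_simps)
  qed
qed

lemma good_add:
  assumes "good g" "good h" shows "good (\<lambda>x. g x + h x)"
proof -
  obtain C a where C: "C \<ge> 0" "\<And>x. x > 1 \<Longrightarrow> \<bar>g x\<bar> \<le> C * (1 + ln x ^ a)" using goodE[OF assms(1)] by blast
  obtain D b where D: "D \<ge> 0" "\<And>x. x > 1 \<Longrightarrow> \<bar>h x\<bar> \<le> D * (1 + ln x ^ b)" using goodE[OF assms(2)] by blast
  show ?thesis
  proof (rule goodI[of _ "2 * C + 2 * D" "a + b"])
    show "(\<lambda>x. g x + h x) \<in> borel_measurable borel" using good_meas[OF assms(1)] good_meas[OF assms(2)] by measurable
    fix x :: real assume x: "x > 1"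
    define L where "L = ln x"
    have L: "L \<ge> 0" using x by (simp add: L_def)
    have "L ^ a \<le> 1 + L ^ (a+b)" "L ^ b \<le> 1 + L ^ (a+b)"
      using pow_le_aux[OF L, of a b] pow_le_aux[OF L, of b a] by (simp_all add: add.commute)
    moreover have "L ^ (a+b) \<ge> 0" using L by simp
    ultimately have "C * (1 + L ^ a) \<le> C * (2 * (1 + L ^ (a+b)))" "D * (1 + L ^ b) \<le> D * (2 * (1 + L ^ (a+b)))"
      using C D by (auto intro!: mult_left_mono)
    moreover have "\<bar>g x + h x\<bar> \<le> C * (1 + L ^ a) + D * (1 + L ^ b)"
      using C(2)[OF x] D(2)[OF x] abs_triangle_ineq[of "g x" "h x"] unfolding L_def by linarith
    ultimately show "\<bar>g x + h x\<bar> \<le> (2 * C + 2 * D) * (1 + ln x ^ (a + b))"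
      unfolding L_def by (simp add: algebra_simps)
  qed
qed

lemma good_cmult: "good g \<Longrightarrow> good (\<lambda>x. c * g x)"
  using good_mult[OF good_const] .

lemma good_minus: "good g \<Longrightarrow> good (\<lambda>x. - g x)"
  using good_cmult[of g "-1"] by simp

lemma good_diff: "good g \<Longrightarrow> good h \<Longrightarrow> good (\<lambda>x. g x - h x)"
  using good_add[OF _ good_minus, of g h] by simp

lemma good_sum: "(\<And>i. i \<in> I \<Longrightarrow> good (f i)) \<Longrightarrow> good (\<lambda>x. \<Sum>i\<in>I. f i x)"
proof (induction I rule: infinite_finite_induct)
  case (infinite A) then show ?case by (simp add: good_const)
next
  case empty then show ?case by (simp add: good_const)
next
  case (insert a A) then show ?case by (simp add: good_add)
qed

lemma good_poly: "good (\<lambda>x. poly p (ln x))"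
  unfolding poly_altdef by (intro good_sum good_cmult good_lnpow)

lemma good_frac: "good frac"
  by (rule good_bounded[of _ 1]) (auto simp: frac_lt_1 less_imp_le)

lemma good_laguerre: "good (\<lambda>x. laguerre k m (ln x))"
  unfolding laguerre_def by (intro good_sum good_cmult good_lnpow)

lemma int_good:
  assumes "good g" shows "set_integrable lborel {1<..} (\<lambda>x. g x / x\<^sup>2)"
proof -
  obtain C k where C: "C \<ge> 0" "\<And>x. x > 1 \<Longrightarrow> \<bar>g x\<bar> \<le> C * (1 + ln x ^ k)" using goodE[OF assms] by blast
  show ?thesis
  proof (rule sib)
    show "(\<lambda>x. g x / x\<^sup>2) \<in> borel_measurable borel" using good_meas[OF assms] by measurable
    show "set_integrable lborel {1<..} (\<lambda>x::real. C * (ln x ^ 0 / x\<^sup>2) + C * (ln x ^ k / x\<^sup>2))"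
      by (intro set_integral_add(1) set_integrable_mult_right moment(1))
    fix x :: real assume x: "x > 1"
    have "\<bar>g x / x\<^sup>2\<bar> = \<bar>g x\<bar> / x\<^sup>2" by (simp add: abs_divide)
    also have "\<dots> \<le> C * (1 + ln x ^ k) / x\<^sup>2" using C(2)[OF x] by (intro divide_right_mono) auto
    finally show "\<bar>g x / x\<^sup>2\<bar> \<le> C * (ln x ^ 0 / x\<^sup>2) + C * (ln x ^ k / x\<^sup>2)"
      by (simp add: field_simps add_divide_distrib)
  qed
qed


lemma sint_cong:
  fixes f g :: "real \<Rightarrow> real"
  assumes "\<And>x. x > 1 \<Longrightarrow> f x = g x"
  shows "set_lebesgue_integral lborel {1<..} f = set_lebesgue_integral lborel {1<..} g"
  unfolding set_lebesgue_integral_def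
  by (rule Bochner_Integration.integral_cong) (auto simp: indicator_def assms)

lemma sint_nonneg:
  fixes f :: "real \<Rightarrow> real"
  assumes "\<And>x. x > 1 \<Longrightarrow> 0 \<le> f x"
  shows "0 \<le> set_lebesgue_integral lborel {1<..} f"
  unfolding set_lebesgue_integral_def
  by (rule Bochner_Integration.integral_nonneg) (auto simp: indicator_def assms)

definition IP :: "nat \<Rightarrow> (real \<Rightarrow> real) \<Rightarrow> (real \<Rightarrow> real) \<Rightarrow> real" where
  "IP m g h = set_lebesgue_integral lborel {1<..} (\<lambda>x. g x * h x * ln x ^ m / x\<^sup>2)"

definition Q :: "nat \<Rightarrow> (real \<Rightarrow> real) \<Rightarrow> real" where
  "Q m g = IP m g g"

lemma int_IP: "good g \<Longrightarrow> good h \<Longrightarrow> set_integrable lborel {1<..} (\<lambda>x. g x * h x * ln x ^ m / x\<^sup>2)"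
  using int_good[OF good_mult[OF good_mult[of g h] good_lnpow[of m]]] by simp

lemma Q_nonneg: "Q m g \<ge> 0"
  unfolding Q_def IP_def by (rule sint_nonneg) auto

lemma Q_mono:
  assumes "good g" "good h" "\<And>x. x > 1 \<Longrightarrow> \<bar>g x\<bar> \<le> \<bar>h x\<bar>"
  shows "Q m g \<le> Q m h"
  unfolding Q_def IP_def
proof (rule set_integral_mono[OF int_IP int_IP])
  fix x :: real assume "x \<in> {1<..}"
  then have x: "x > 1" by simp
  have "g x * g x \<le> h x * h x"
    using assms(3)[OF x] by (metis abs_ge_zero abs_mult_self_eq mult_mono)
  then show "g x * g x * ln x ^ m / x\<^sup>2 \<le> h x * h x * ln x ^ m / x\<^sup>2"
    using x by (intro divide_right_mono mult_right_mono) auto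
qed (use assms in auto)

lemma Q_cmult: "good g \<Longrightarrow> Q m (\<lambda>x. c * g x) = c\<^sup>2 * Q m g"
  unfolding Q_def IP_def
  by (subst set_integral_mult_right[symmetric]) (rule sint_cong, simp add: power2_eq_square)

lemma Q_add_le:
  assumes "good g" "good h"
  shows "Q m (\<lambda>x. g x + h x) \<le> 2 * Q m g + 2 * Q m h"
proof -
  have "Q m (\<lambda>x. g x + h x) \<le> set_lebesgue_integral lborel {1<..}
          (\<lambda>x. 2 * (g x * g x * ln x ^ m / x\<^sup>2) + 2 * (h x * h x * ln x ^ m / x\<^sup>2))"
    unfolding Q_def IP_def
  proof (rule set_integral_mono)
    show "set_integrable lborel {1<..} (\<lambda>x. (g x + h x) * (g x + h x) * ln x ^ m / x\<^sup>2)"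
      by (intro int_IP good_add assms)
    show "set_integrable lborel {1<..}
          (\<lambda>x. 2 * (g x * g x * ln x ^ m / x\<^sup>2) + 2 * (h x * h x * ln x ^ m / x\<^sup>2))"
      by (intro set_integral_add(1) set_integrable_mult_right int_IP assms)
    fix x :: real assume "x \<in> {1<..}"
    then have x: "x > 1" by simp
    have sq: "(a + b) * (a + b) \<le> 2 * (a * a) + 2 * (b * b)" for a b :: real
    proof -
      have "2 * (a * a) + 2 * (b * b) - (a + b) * (a + b) = (a - b) * (a - b)" by (simp add: algebra_simps)
      moreover have "(a - b) * (a - b) \<ge> 0" by simp
      ultimately show ?thesis by linarith
    qed
    have "(g x + h x) * (g x + h x) \<le> 2 * (g x * g x) + 2 * (h x * h x)" by (rule sq)
    then have "(g x + h x) * (g x + h x) * (ln x ^ m / x\<^sup>2) \<le> (2 * (g x * g x) + 2 * (h x * h x)) * (ln x ^ m / x\<^sup>2)"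
      using x by (intro mult_right_mono) auto
    moreover have "2 * (g x * g x * ln x ^ m / x\<^sup>2) + 2 * (h x * h x * ln x ^ m / x\<^sup>2)
       = (2 * (g x * g x) + 2 * (h x * h x)) * (ln x ^ m / x\<^sup>2)" by (simp add: ring_distribs add_divide_distrib mult.assoc)
    ultimately show "(g x + h x) * (g x + h x) * ln x ^ m / x\<^sup>2
         \<le> 2 * (g x * g x * ln x ^ m / x\<^sup>2) + 2 * (h x * h x * ln x ^ m / x\<^sup>2)"
      by simp
  qed
  also have "\<dots> = 2 * Q m g + 2 * Q m h"
  proof -
    have i1: "set_integrable lborel {1<..} (\<lambda>x. 2 * (g x * g x * ln x ^ m / x\<^sup>2))"
      by (rule set_integrable_mult_right) (rule int_IP[OF assms(1,1)])
    have i2: "set_integrable lborel {1<..} (\<lambda>x. 2 * (h x * h x * ln x ^ m / x\<^sup>2))"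
      by (rule set_integrable_mult_right) (rule int_IP[OF assms(2,2)])
    show ?thesis unfolding Q_def IP_def by (simp only: set_integral_add(2)[OF i1 i2] set_integral_mult_right)
  qed
  finally show ?thesis .
qed

definition approx :: "nat \<Rightarrow> (real \<Rightarrow> real) \<Rightarrow> bool" where
  "approx m g \<longleftrightarrow> (\<forall>e>0. \<exists>p. Q m (\<lambda>x. g x - poly p (ln x)) < e)"

lemma Q_zero: "Q m (\<lambda>x. 0) = 0"
  unfolding Q_def IP_def by simp

lemma approx_poly: "approx m (\<lambda>x. poly p (ln x))"
  unfolding approx_def by (auto intro!: exI[of _ p] simp: Q_zero)

lemma approx_closure:
  assumes g: "good g"
  assumes H: "\<And>e. e > 0 \<Longrightarrow> \<exists>h. good h \<and> approx m h \<and> Q m (\<lambda>x. g x - h x) < e"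
  shows "approx m g"
  unfolding approx_def
proof (intro allI impI)
  fix e :: real assume e: "e > 0"
  have e4: "e/4 > 0" using e by simp
  obtain h where h: "good h" "approx m h" "Q m (\<lambda>x. g x - h x) < e/4" using H[OF e4] by blast
  obtain p where p: "Q m (\<lambda>x. h x - poly p (ln x)) < e/4" using h(2) e4 unfolding approx_def by blast
  have "Q m (\<lambda>x. g x - poly p (ln x)) = Q m (\<lambda>x. (g x - h x) + (h x - poly p (ln x)))" by simp
  also have "\<dots> \<le> 2 * Q m (\<lambda>x. g x - h x) + 2 * Q m (\<lambda>x. h x - poly p (ln x))"
    by (intro Q_add_le good_diff g h good_poly)
  also have "\<dots> < e" using h(3) p by simp
  finally show "\<exists>p. Q m (\<lambda>x. g x - poly p (ln x)) < e" by blast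
qed

lemma approx_add:
  assumes "good g" "good h" "approx m g" "approx m h"
  shows "approx m (\<lambda>x. g x + h x)"
  unfolding approx_def
proof (intro allI impI)
  fix e :: real assume e: "e > 0"
  have e4: "e/4 > 0" using e by simp
  obtain p where p: "Q m (\<lambda>x. g x - poly p (ln x)) < e/4" using assms(3) e4 unfolding approx_def by blast
  obtain q where q: "Q m (\<lambda>x. h x - poly q (ln x)) < e/4" using assms(4) e4 unfolding approx_def by blast
  have "Q m (\<lambda>x. g x + h x - poly (p + q) (ln x)) = Q m (\<lambda>x. (g x - poly p (ln x)) + (h x - poly q (ln x)))"
    by (simp add: algebra_simps)
  also have "\<dots> \<le> 2 * Q m (\<lambda>x. g x - poly p (ln x)) + 2 * Q m (\<lambda>x. h x - poly q (ln x))"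
    by (intro Q_add_le good_diff assms good_poly)
  also have "\<dots> < e" using p q by simp
  finally show "\<exists>p. Q m (\<lambda>x. g x + h x - poly p (ln x)) < e" by blast
qed

lemma approx_cmult:
  assumes "good g" "approx m g"
  shows "approx m (\<lambda>x. c * g x)"
proof (cases "c = 0")
  case True then show ?thesis using approx_poly[of m 0] by simp
next
  case False
  show ?thesis unfolding approx_def
  proof (intro allI impI)
    fix e :: real assume e: "e > 0"
    have ec: "e / c\<^sup>2 > 0" using e False by simp
    obtain p where p: "Q m (\<lambda>x. g x - poly p (ln x)) < e / c\<^sup>2"
      using assms(2) ec unfolding approx_def by blast
    have "Q m (\<lambda>x. c * g x - poly (smult c p) (ln x)) = Q m (\<lambda>x. c * (g x - poly p (ln x)))"
      by (simp add: algebra_simps)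
    also have "\<dots> = c\<^sup>2 * Q m (\<lambda>x. g x - poly p (ln x))"
      by (intro Q_cmult good_diff assms good_poly)
    also have "\<dots> < e" using p False by (simp add: field_simps)
    finally show "\<exists>p. Q m (\<lambda>x. c * g x - poly p (ln x)) < e" by blast
  qed
qed

lemma approx_sum:
  "(\<And>i. i \<in> I \<Longrightarrow> good (f i) \<and> approx m (f i)) \<Longrightarrow> approx m (\<lambda>x. \<Sum>i\<in>I. f i x)"
proof (induction I rule: infinite_finite_induct)
  case (infinite A) then show ?case using approx_poly[of m 0] by simp
next
  case empty then show ?case using approx_poly[of m 0] by simp
next
  case (insert a A)
  then show ?case by (simp, intro approx_add good_sum) auto
qed


lemma exp_taylor_neg:
  fixes h :: real assumes h: "h \<le> 0"
  shows "\<bar>exp h - (\<Sum>l<N. h ^ l / fact l)\<bar> \<le> \<bar>h\<bar> ^ N / fact N"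
proof (cases "N = 0")
  case True then show ?thesis using h by simp
next
  case N: False
  show ?thesis
  proof (cases "h = 0")
    case True
    have "(\<Sum>l<N. (0::real) ^ l / fact l) = (\<Sum>l<N. if l = 0 then 1 else 0)"
      by (rule sum.cong) auto
    also have "\<dots> = 1" using N by simp
    finally have "(\<Sum>l<N. (0::real) ^ l / fact l) = 1" .
    then show ?thesis using True by simp
  next
    case False
    then have hn: "h < 0" using h by simp
    obtain t where t: "h < t" "t < 0" "exp h = (\<Sum>m<N. exp 0 / fact m * h ^ m) + exp t / fact N * h ^ N"
      using Maclaurin_minus[of h N "\<lambda>n. exp" exp] hn N by (auto intro: DERIV_exp)
    have "\<bar>exp h - (\<Sum>l<N. h ^ l / fact l)\<bar> = \<bar>exp t / fact N * h ^ N\<bar>"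
      using t(3) by simp
    also have "\<dots> = exp t * (\<bar>h\<bar> ^ N / fact N)" by (simp add: abs_mult power_abs)
    also have "\<dots> \<le> 1 * (\<bar>h\<bar> ^ N / fact N)"
      using t(2) by (intro mult_right_mono) auto
    finally show ?thesis by simp
  qed
qed

lemma fact_add_le: "fact (n + c) \<le> fact n * (n + c) ^ c"
proof (induction c)
  case 0 then show ?case by simp
next
  case (Suc c)
  have "fact (n + Suc c) = (n + Suc c) * fact (n + c)" by simp
  also have "\<dots> \<le> (n + Suc c) * (fact n * (n + c) ^ c)" by (rule mult_le_mono2) (rule Suc.IH)
  also have "\<dots> \<le> (n + Suc c) * (fact n * (n + Suc c) ^ c)"
    by (intro mult_left_mono power_mono) auto
  finally show ?case by (simp add: algebra_simps)
qed

lemma fact_double_le: "(fact (2 * n) :: nat) \<le> 4 ^ n * (fact n) ^ 2"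
proof -
  have "fact n * fact (2*n - n) * (2*n choose n) = fact (2*n)"
    by (rule binomial_fact_lemma) simp
  moreover have "(2*n choose n) \<le> 2 ^ (2*n)" by (rule binomial_le_pow2)
  moreover have "(2::nat) ^ (2*n) = 4 ^ n" by (simp add: power_mult)
  ultimately have "fact n * fact n * (2*n choose n) = fact (2*n)" "(2*n choose n) \<le> 4 ^ n"
    by simp_all
  then have "(fact (2*n) :: nat) \<le> fact n * fact n * 4 ^ n"
    by (metis mult_le_mono2)
  then show ?thesis by (simp add: power2_eq_square mult.commute)
qed

lemma taylor_seq_lim: "(\<lambda>N. fact (2 * N + c) / (16 ^ N * (fact N)\<^sup>2) :: real) \<longlonglongrightarrow> 0"
proof -
  have b: "fact (2 * N + c) / (16 ^ N * (fact N)\<^sup>2) \<le> (real (2 * N + c)) ^ c / 4 ^ N" for N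
  proof -
    have "fact (2 * N + c) \<le> fact (2 * N) * (2 * N + c) ^ c" by (rule fact_add_le)
    also have "\<dots> \<le> 4 ^ N * (fact N) ^ 2 * (2 * N + c) ^ c"
      by (intro mult_right_mono fact_double_le) auto
    finally have "real (fact (2 * N + c)) \<le> real (4 ^ N * (fact N) ^ 2 * (2 * N + c) ^ c)"
      by (simp only: of_nat_le_iff)
    then have le: "fact (2 * N + c) \<le> (4::real) ^ N * (fact N) ^ 2 * (real (2 * N + c)) ^ c"
      by simp
    have "fact (2 * N + c) / (16 ^ N * (fact N)\<^sup>2) \<le> (4 ^ N * (fact N) ^ 2 * (real (2 * N + c)) ^ c) / (16 ^ N * (fact N)\<^sup>2)"
      by (intro divide_right_mono le) auto
    also have "\<dots> = (real (2 * N + c)) ^ c / 4 ^ N"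
    proof -
      have "(16::real) ^ N = 4 ^ N * 4 ^ N" by (simp add: power_mult_distrib[symmetric])
      then show ?thesis by (simp add: field_simps)
    qed
    finally show ?thesis .
  qed
  have "(\<lambda>N. (real (2 * N + c)) ^ c / 4 ^ N) \<longlonglongrightarrow> 0" by real_asymp
  then show ?thesis
    by (rule Lim_null_comparison[rotated]) (use b in \<open>auto intro!: always_eventually\<close>)
qed


lemma good_powr: "s \<ge> 0 \<Longrightarrow> good (\<lambda>x. x powr (- s))"
proof (rule good_bounded[of _ 1])
  fix x :: real assume "s \<ge> 0" "x > 1"
  then have "1 \<le> x powr s" by (intro ge_one_powr_ge_zero) auto
  then show "\<bar>x powr (- s)\<bar> \<le> 1" by (simp add: powr_minus_divide divide_le_eq_1)
qed measurable

lemma approx_taylor: "approx m (\<lambda>x. x powr (-1/4) * ln x ^ i)"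
  unfolding approx_def
proof (intro allI impI)
  fix e :: real assume e: "e > 0"
  let ?c = "2 * i + m"
  from taylor_seq_lim[of ?c] e obtain N where N: "fact (2 * N + ?c) / (16 ^ N * (fact N)\<^sup>2) < (e::real)"
    by (metis (no_types, lifting) LIMSEQ_D diff_zero norm_divide real_norm_def abs_of_nonneg
        zero_le_divide_iff order.refl le_less_trans abs_ge_self)
  define p :: "real poly" where "p = monom 1 i * (\<Sum>l<N. monom ((-1/4)^l / fact l) l)"
  have pv: "poly p u = u ^ i * (\<Sum>l<N. (- u / 4) ^ l / fact l)" for u
    unfolding p_def poly_mult poly_monom poly_sum
    by (simp add: power_mult_distrib[symmetric] field_simps)
  define r where "r x = ln x ^ (i + N) / (4 ^ N * fact N)" for x :: real
  have gr: "good r" unfolding r_def by (intro good_cmult[of "\<lambda>x. ln x ^ (i+N)" "1 / (4 ^ N * fact N)", simplified] good_lnpow)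
  have gp: "good (\<lambda>x. x powr (-1/4))" using good_powr[of "1/4"] by simp
  have g1: "good (\<lambda>x. x powr (-1/4) * ln x ^ i - poly p (ln x))"
    by (intro good_diff good_mult gp good_lnpow good_poly)
  have "Q m (\<lambda>x. x powr (-1/4) * ln x ^ i - poly p (ln x)) \<le> Q m r"
  proof (rule Q_mono[OF g1 gr])
    fix x :: real assume x: "x > 1"
    define u where "u = ln x"
    have u: "u \<ge> 0" using x by (simp add: u_def)
    have "x powr (-1/4) = exp (- u / 4)" using x by (simp add: powr_def u_def)
    then have "\<bar>x powr (-1/4) * ln x ^ i - poly p (ln x)\<bar> = \<bar>u ^ i * (exp (- u / 4) - (\<Sum>l<N. (- u / 4) ^ l / fact l))\<bar>"
      unfolding pv u_def[symmetric] by (simp add: algebra_simps)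
    also have "\<dots> = u ^ i * \<bar>exp (- u / 4) - (\<Sum>l<N. (- u / 4) ^ l / fact l)\<bar>"
      using u by (simp add: abs_mult)
    also have "\<dots> \<le> u ^ i * (\<bar>- u / 4\<bar> ^ N / fact N)"
      using u by (intro mult_left_mono exp_taylor_neg) auto
    also have "\<dots> = r x" unfolding r_def u_def[symmetric] using u
      by (simp add: power_add power_divide)
    finally show "\<bar>x powr (-1/4) * ln x ^ i - poly p (ln x)\<bar> \<le> \<bar>r x\<bar>" by simp
  qed
  also have "Q m r = fact (2 * N + ?c) / (16 ^ N * (fact N)\<^sup>2)"
  proof -
    have "Q m r = set_lebesgue_integral lborel {1<..} (\<lambda>x. 1 / (16 ^ N * (fact N)\<^sup>2) * (ln x ^ (2 * N + ?c) / x\<^sup>2))"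
      unfolding Q_def IP_def r_def
    proof (rule sint_cong)
      fix x :: real assume "x > 1"
      have h16: "(16::real) ^ N = 4 ^ N * 4 ^ N" by (simp add: power_mult_distrib[symmetric])
      have "2 * N + (2 * i + m) = (i + N) + (i + N) + m" by simp
      then have hp: "ln x ^ (2 * N + (2 * i + m)) = ln x ^ (i + N) * ln x ^ (i + N) * ln x ^ m"
        by (simp only: power_add)
      show "ln x ^ (i + N) / (4 ^ N * fact N) * (ln x ^ (i + N) / (4 ^ N * fact N)) * ln x ^ m / x\<^sup>2 =
          1 / (16 ^ N * (fact N)\<^sup>2) * (ln x ^ (2 * N + (2 * i + m)) / x\<^sup>2)"
        unfolding hp h16 by (simp add: power2_eq_square)
    qed
    also have "\<dots> = fact (2 * N + ?c) / (16 ^ N * (fact N)\<^sup>2)"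
      by (simp only: set_integral_mult_right moment(2)) simp
    finally show ?thesis .
  qed
  finally have "Q m (\<lambda>x. x powr (-1/4) * ln x ^ i - poly p (ln x)) < e"
    using N by linarith
  then show "\<exists>p. Q m (\<lambda>x. x powr (-1/4) * ln x ^ i - poly p (ln x)) < e" by blast
qed


lemma good_E: "good (\<lambda>x. (x powr (-1/4)) ^ k)"
proof (rule good_bounded[of _ 1])
  fix x :: real assume "x > 1"
  then have "1 \<le> x powr (1/4)" by (intro ge_one_powr_ge_zero) auto
  then have "\<bar>x powr (-1/4)\<bar> \<le> 1" by (simp add: powr_minus_divide divide_le_eq_1)
  then show "\<bar>(x powr (-1/4)) ^ k\<bar> \<le> 1" by (simp add: power_abs power_le_one)
qed measurable

lemma approx_E: "approx m (\<lambda>x. (x powr (-1/4)) ^ k * ln x ^ j)"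
proof (induction k arbitrary: j)
  case 0
  have "approx m (\<lambda>x. poly (monom 1 j) (ln x))" by (rule approx_poly)
  then show ?case by (simp add: poly_monom)
next
  case (Suc k)
  let ?g = "\<lambda>x. (x powr (-1/4)) ^ k * ln x ^ j"
  have gg: "good ?g" by (intro good_mult good_E good_lnpow)
  have gp: "good (\<lambda>x. x powr (-1/4))" using good_powr[of "1/4"] by simp
  show ?case
  proof (rule approx_closure)
    show "good (\<lambda>x. (x powr (- 1 / 4)) ^ Suc k * ln x ^ j)" by (intro good_mult good_E good_lnpow)
    fix e :: real assume e: "e > 0"
    obtain p where p: "Q m (\<lambda>x. ?g x - poly p (ln x)) < e" using Suc.IH[of j] e unfolding approx_def by blast
    let ?h = "\<lambda>x. x powr (-1/4) * poly p (ln x)"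
    have hs: "?h = (\<lambda>x. \<Sum>i\<le>degree p. coeff p i * (x powr (-1/4) * ln x ^ i))"
      by (rule ext) (simp add: poly_altdef sum_distrib_left algebra_simps)
    have gh: "good ?h" by (intro good_mult gp good_poly)
    have ah: "approx m ?h" unfolding hs
      by (intro approx_sum conjI good_cmult good_mult gp good_lnpow approx_cmult approx_taylor)
    have "Q m (\<lambda>x. (x powr (- 1 / 4)) ^ Suc k * ln x ^ j - ?h x) \<le> Q m (\<lambda>x. ?g x - poly p (ln x))"
    proof (rule Q_mono)
      show "good (\<lambda>x. (x powr (- 1 / 4)) ^ Suc k * ln x ^ j - ?h x)"
        by (intro good_diff good_mult good_E good_lnpow gp good_poly)
      show "good (\<lambda>x. ?g x - poly p (ln x))" by (intro good_diff gg good_poly)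
      fix x :: real assume x: "x > 1"
      then have "1 \<le> x powr (1/4)" by (intro ge_one_powr_ge_zero) auto
      then have a: "\<bar>x powr (-1/4)\<bar> \<le> 1" by (simp add: powr_minus_divide divide_le_eq_1)
      have "(x powr (- 1 / 4)) ^ Suc k * ln x ^ j - ?h x = x powr (-1/4) * (?g x - poly p (ln x))"
        by (simp add: algebra_simps)
      then show "\<bar>(x powr (- 1 / 4)) ^ Suc k * ln x ^ j - ?h x\<bar> \<le> \<bar>?g x - poly p (ln x)\<bar>"
        using a by (simp add: abs_mult mult_left_le_one_le)
    qed
    then show "\<exists>h. good h \<and> approx m h \<and> Q m (\<lambda>x. (x powr (- 1 / 4)) ^ Suc k * ln x ^ j - h x) < e"
      using gh ah p by (intro exI[of _ ?h]) auto
  qed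
qed

lemma Q_const: "Q m (\<lambda>x. c) = c\<^sup>2 * fact m"
proof -
  have "Q m (\<lambda>x. c) = set_lebesgue_integral lborel {1<..} (\<lambda>x. c\<^sup>2 * (ln x ^ m / x\<^sup>2))"
    unfolding Q_def IP_def by (rule sint_cong) (simp add: power2_eq_square)
  also have "\<dots> = c\<^sup>2 * fact m" by (simp only: set_integral_mult_right moment(2))
  finally show ?thesis .
qed

lemma approx_weierstrass:
  fixes \<theta> :: "real \<Rightarrow> real"
  assumes cont: "continuous_on UNIV \<theta>"
  shows "approx m (\<lambda>x. \<theta> (x powr (-1/4)))"
proof -
  have mth: "\<theta> \<in> borel_measurable borel" using cont by (rule borel_measurable_continuous_onI)
  have gt: "good (\<lambda>x. \<theta> (x powr (-1/4)))"
  proof -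
    obtain B where B: "\<And>t. t \<in> {0..1} \<Longrightarrow> \<bar>\<theta> t\<bar> \<le> B"
      using compact_imp_bounded[OF compact_continuous_image[OF continuous_on_subset[OF cont] compact_Icc, of 0 1]]
      unfolding bounded_iff by fastforce
    show ?thesis
    proof (rule good_bounded[of _ B])
      show "(\<lambda>x. \<theta> (x powr (-1/4))) \<in> borel_measurable borel" using mth by measurable
      fix x :: real assume "x > 1"
      then have "1 \<le> x powr (1/4)" by (intro ge_one_powr_ge_zero) auto
      then have "x powr (-1/4) \<in> {0..1}" by (simp add: powr_minus_divide divide_le_eq_1)
      then show "\<bar>\<theta> (x powr (-1/4))\<bar> \<le> B" by (rule B)
    qed
  qed
  show ?thesis
  proof (rule approx_closure[OF gt])
    fix e :: real assume e: "e > 0"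
    define d where "d = sqrt (e / (2 * fact m))"
    have d: "d > 0" using e by (simp add: d_def)
    have d2: "d\<^sup>2 * fact m = e / 2" using e by (simp add: d_def)
    obtain P where P: "polynomial_function P" "\<And>t. t \<in> {0..1} \<Longrightarrow> norm (\<theta> t - P t) < d"
      using Stone_Weierstrass_polynomial_function[OF compact_Icc continuous_on_subset[OF cont] d, of 0 1]
      by auto
    obtain a n where an: "P = (\<lambda>t. \<Sum>i\<le>n. a i * t ^ i)"
      using P(1) unfolding real_polynomial_function_eq[symmetric] real_polynomial_function_iff_sum by blast
    let ?h = "\<lambda>x. \<Sum>i\<le>n. a i * ((x powr (-1/4)) ^ i * ln x ^ 0)"
    have gh: "good ?h" by (intro good_sum good_cmult good_mult good_E good_lnpow)
    have ah: "approx m ?h" by (intro approx_sum conjI good_cmult good_mult good_E good_lnpow approx_cmult approx_E)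
    have "Q m (\<lambda>x. \<theta> (x powr (-1/4)) - ?h x) \<le> Q m (\<lambda>x. d)"
    proof (rule Q_mono)
      show "good (\<lambda>x. \<theta> (x powr (-1/4)) - ?h x)" by (intro good_diff gt gh)
      show "good (\<lambda>x. d)" by (rule good_const)
      fix x :: real assume "x > 1"
      then have "1 \<le> x powr (1/4)" by (intro ge_one_powr_ge_zero) auto
      then have "x powr (-1/4) \<in> {0..1}" by (simp add: powr_minus_divide divide_le_eq_1)
      from P(2)[OF this] have "\<bar>\<theta> (x powr (-1/4)) - P (x powr (-1/4))\<bar> < d" by simp
      then show "\<bar>\<theta> (x powr (-1/4)) - ?h x\<bar> \<le> \<bar>d\<bar>" using d unfolding an by simp
    qed
    also have "\<dots> = e / 2" using d2 by (simp add: Q_const)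
    also have "\<dots> < e" using e by simp
    finally show "\<exists>h. good h \<and> approx m h \<and> Q m (\<lambda>x. \<theta> (x powr (-1/4)) - h x) < e"
      using gh ah by blast
  qed
qed


definition gN :: "nat \<Rightarrow> real \<Rightarrow> real" where
  "gN n y = min y (real (n+1) * (1 - y))"

definition psi :: "nat \<Rightarrow> real \<Rightarrow> real" where
  "psi n x = gN n (frac x)"

definition chi :: "real \<Rightarrow> real \<Rightarrow> real" where
  "chi K x = max 0 (min 1 (K - x))"

definition theta :: "nat \<Rightarrow> real \<Rightarrow> real \<Rightarrow> real" where
  "theta n K t = psi n (1 / t ^ 4) * chi K (1 / t ^ 4)"

lemma isCont_gN: "isCont (gN n) y"
  unfolding gN_def by (intro continuous_intros)

lemma isCont_psi: "isCont (psi n) x"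
proof (cases "x \<in> \<int>")
  case False
  have "isCont (\<lambda>x. gN n (frac x)) x"
    by (rule continuous_at_compose[OF continuous_frac[OF False] isCont_gN, unfolded o_def])
  then show ?thesis unfolding psi_def[abs_def] .
next
  case True
  then obtain z where z: "x = of_int z" by (auto elim: Ints_cases)
  have fx: "psi n x = 0" unfolding psi_def gN_def z by simp
  have R: "continuous (at_right x) (psi n)"
    unfolding continuous_within
  proof (rule Lim_transform_eventually)
    show "((\<lambda>y. gN n (y - x)) \<longlongrightarrow> psi n x) (at_right x)"
    proof -
      have "((\<lambda>y. gN n (y - x)) \<longlongrightarrow> gN n (x - x)) (at x)"
        by (intro isCont_tendsto_compose[OF isCont_gN] tendsto_intros)
      then have "((\<lambda>y. gN n (y - x)) \<longlongrightarrow> gN n (x - x)) (at_right x)"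
        by (rule tendsto_within_subset) simp
      moreover have "gN n (x - x) = psi n x" using fx by (simp add: gN_def)
      ultimately show ?thesis by simp
    qed
    show "\<forall>\<^sub>F y in at_right x. gN n (y - x) = psi n y"
      using eventually_at_right_real[of x "x + 1", OF less_add_one]
    proof eventually_elim
      case (elim y)
      have "floor y = z" using elim z by (subst floor_eq_iff) auto
      then show ?case unfolding psi_def frac_def z by simp
    qed
  qed
  have L: "continuous (at_left x) (psi n)"
    unfolding continuous_within
  proof (rule Lim_transform_eventually)
    show "((\<lambda>y. gN n (y - x + 1)) \<longlongrightarrow> psi n x) (at_left x)"
    proof -
      have "((\<lambda>y. gN n (y - x + 1)) \<longlongrightarrow> gN n (x - x + 1)) (at x)"
        by (intro isCont_tendsto_compose[OF isCont_gN] tendsto_intros)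
      then have "((\<lambda>y. gN n (y - x + 1)) \<longlongrightarrow> gN n (x - x + 1)) (at_left x)"
        by (rule tendsto_within_subset) simp
      moreover have "gN n (x - x + 1) = psi n x" using fx by (simp add: gN_def)
      ultimately show ?thesis by simp
    qed
    show "\<forall>\<^sub>F y in at_left x. gN n (y - x + 1) = psi n y"
    proof -
      have ev: "eventually (\<lambda>y. y \<in> {x - 1<..<x}) (at_left x)" by (rule eventually_at_left_real) simp
      then show ?thesis
    proof eventually_elim
      case (elim y)
      have "floor y = z - 1" using elim z by (subst floor_eq_iff) auto
      then have fl: "real_of_int \<lfloor>y\<rfloor> = real_of_int z - 1" by simp
      have e: "y - (real_of_int z - 1) = y - real_of_int z + 1" by simp
      show ?case unfolding psi_def frac_def fl e z by (rule refl)
    qed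
    qed
  qed
  show ?thesis using continuous_at_split L R by blast
qed

lemma isCont_chi: "isCont (chi K) x"
  unfolding chi_def by (intro continuous_intros)

lemma theta_cont: "continuous_on UNIV (theta n K)"
proof (rule continuous_at_imp_continuous_on, intro ballI)
  fix t :: real
  show "isCont (theta n K) t"
  proof (cases "t = 0")
    case False
    have "isCont (\<lambda>t. 1 / t ^ 4) t" using False by (intro continuous_intros) auto
    then have "isCont (\<lambda>t. psi n (1 / t ^ 4) * chi K (1 / t ^ 4)) t"
      by (intro continuous_intros continuous_at_compose[OF _ isCont_psi, unfolded o_def]
          continuous_at_compose[OF _ isCont_chi, unfolded o_def]) (use False in auto)
    then show ?thesis unfolding theta_def[abs_def] .
  next
    case True
    have th0: "theta n K 0 = 0" by (simp add: theta_def psi_def gN_def)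
    have "eventually (\<lambda>s. theta n K s = 0) (at 0)"
    proof -
      define r where "r = 1 / (\<bar>K\<bar> + 1)"
      have r: "r > 0" by (simp add: r_def)
      have "eventually (\<lambda>s. s \<noteq> 0 \<and> \<bar>s\<bar> < min r 1) (at (0::real))"
        using r by (auto simp: eventually_at dist_real_def intro!: exI[of _ "min r 1"])
      then show ?thesis
      proof eventually_elim
        case (elim s)
        then have s0: "\<bar>s\<bar> > 0" "\<bar>s\<bar> < 1" "\<bar>s\<bar> < r" by auto
        have "s ^ 4 = \<bar>s\<bar> ^ 4" by (simp add: power_even_abs)
        moreover have "\<bar>s\<bar> ^ 4 \<le> \<bar>s\<bar> ^ 1" by (rule power_decreasing) (use s0 in auto)
        ultimately have "s ^ 4 < r" "s ^ 4 > 0" using s0 by auto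
        then have "1 / s ^ 4 > 1 / r" by (intro divide_strict_left_mono) (auto simp: r)
        then have "1 / s ^ 4 > K" unfolding r_def by simp
        then have "chi K (1 / s ^ 4) = 0" unfolding chi_def by simp
        then show ?case unfolding theta_def by simp
      qed
    qed
    then have "(theta n K \<longlongrightarrow> 0) (at 0)" by (rule tendsto_eventually)
    then show ?thesis using True th0 by (simp add: isCont_def)
  qed
qed


lemma Q_dom_conv:
  assumes g: "\<And>n. good (f n)" and b: "\<And>n x. x > 1 \<Longrightarrow> \<bar>f n x\<bar> \<le> 1"
      and l: "\<And>x. x > 1 \<Longrightarrow> (\<lambda>n. f n x) \<longlonglongrightarrow> 0"
  shows "(\<lambda>n. Q m (f n)) \<longlonglongrightarrow> 0"
proof -
  have "(\<lambda>n. integral\<^sup>L lborel (\<lambda>x::real. indicator {1<..} x *\<^sub>R (f n x * f n x * ln x ^ m / x\<^sup>2)))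
        \<longlonglongrightarrow> integral\<^sup>L lborel (\<lambda>x::real. 0::real)"
  proof (rule integral_dominated_convergence[where w = "\<lambda>x. indicator {1<..} x *\<^sub>R (ln x ^ m / x\<^sup>2)"])
    show "(\<lambda>x::real. 0::real) \<in> borel_measurable lborel" by simp
    show "(\<lambda>x. indicator {1<..} x *\<^sub>R (f n x * f n x * ln x ^ m / x\<^sup>2)) \<in> borel_measurable lborel" for n
      using good_meas[OF g[of n]] by measurable
    show "integrable lborel (\<lambda>x::real. indicator {1<..} x *\<^sub>R (ln x ^ m / x\<^sup>2))"
      using moment(1)[of m] unfolding set_integrable_def .
    show "AE x in lborel. (\<lambda>n. indicator {1<..} x *\<^sub>R (f n x * f n x * ln x ^ m / x\<^sup>2)) \<longlonglongrightarrow> 0"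
    proof (rule AE_I2)
      fix x :: real
      show "(\<lambda>n. indicator {1<..} x *\<^sub>R (f n x * f n x * ln x ^ m / x\<^sup>2)) \<longlonglongrightarrow> 0"
      proof (cases "x > 1")
        case True
        have "(\<lambda>n. f n x * f n x * ln x ^ m / x\<^sup>2) \<longlonglongrightarrow> 0 * 0 * ln x ^ m / x\<^sup>2"
          by (intro tendsto_intros l True) (use True in simp)
        moreover have "x \<noteq> 0" using True by simp
        ultimately show ?thesis using True by simp
      next
        case False then show ?thesis by simp
      qed
    qed
    show "AE x in lborel. norm (indicator {1<..} x *\<^sub>R (f n x * f n x * ln x ^ m / x\<^sup>2))
              \<le> indicator {1<..} x *\<^sub>R (ln x ^ m / x\<^sup>2)" for n
    proof (rule AE_I2)
      fix x :: real
      show "norm (indicator {1<..} x *\<^sub>R (f n x * f n x * ln x ^ m / x\<^sup>2))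
              \<le> indicator {1<..} x *\<^sub>R (ln x ^ m / x\<^sup>2)"
      proof (cases "x > 1")
        case True
        have "\<bar>f n x * f n x\<bar> \<le> 1 * 1" unfolding abs_mult
          by (intro mult_mono b True) auto
        moreover have "ln x ^ m / x\<^sup>2 \<ge> 0" using True by simp
        ultimately have "\<bar>f n x * f n x\<bar> * (ln x ^ m / x\<^sup>2) \<le> 1 * (ln x ^ m / x\<^sup>2)"
          by (intro mult_right_mono) auto
        then show ?thesis using True by (simp add: abs_mult)
      next
        case False then show ?thesis by simp
      qed
    qed
  qed
  then show ?thesis unfolding Q_def IP_def set_lebesgue_integral_def by simp
qed

lemma psi_bounds: "0 \<le> psi n x" "psi n x \<le> frac x"
  unfolding psi_def gN_def using frac_lt_1[of x] by auto

lemma good_psi: "good (psi n)"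
proof (rule good_bounded[of _ 1])
  show "psi n \<in> borel_measurable borel"
    by (rule borel_measurable_continuous_onI) (intro continuous_at_imp_continuous_on ballI isCont_psi)
  fix x :: real show "\<bar>psi n x\<bar> \<le> 1" using psi_bounds[of n x] frac_lt_1[of x] by auto
qed

lemma frac_psi_lim: "(\<lambda>n. Q m (\<lambda>x. frac x - psi n x)) \<longlonglongrightarrow> 0"
proof (rule Q_dom_conv)
  show "good (\<lambda>x. frac x - psi n x)" for n by (intro good_diff good_frac good_psi)
  show "\<bar>frac x - psi n x\<bar> \<le> 1" for n x using psi_bounds[of n x] frac_lt_1[of x] by auto
  fix x :: real
  have f1: "1 - frac x > 0" using frac_lt_1[of x] by simp
  obtain N :: nat where N: "real N > frac x / (1 - frac x)" using reals_Archimedean2 by blast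
  have "eventually (\<lambda>n. frac x - psi n x = 0) sequentially"
    using eventually_ge_at_top[of N]
  proof eventually_elim
    case (elim n)
    have "frac x / (1 - frac x) < real (n+1)" using N elim by linarith
    then have "frac x < real (n+1) * (1 - frac x)" using f1 by (simp add: field_simps)
    then show ?case unfolding psi_def gN_def by simp
  qed
  then show "(\<lambda>n. frac x - psi n x) \<longlonglongrightarrow> 0" by (rule tendsto_eventually)
qed

lemma tail_lim: "(\<lambda>K::nat. Q m (\<lambda>x. indicator {real K..} x)) \<longlonglongrightarrow> 0"
proof (rule Q_dom_conv)
  show "good (\<lambda>x. indicator {real K..} x)" for K
    by (rule good_bounded[of _ 1]) (auto simp: indicator_def)
  show "\<bar>indicator {real K..} x\<bar> \<le> (1::real)" for K x by (simp add: indicator_def)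
  fix x :: real
  obtain N :: nat where N: "real N > x" using reals_Archimedean2 by blast
  have "eventually (\<lambda>K. indicator {real K..} x = (0::real)) sequentially"
    using eventually_ge_at_top[of N]
  proof eventually_elim
    case (elim K) then show ?case using N by (auto simp: indicator_def)
  qed
  then show "(\<lambda>K. indicator {real K..} x :: real) \<longlonglongrightarrow> 0" by (rule tendsto_eventually)
qed

lemma approx_frac: "approx m frac"
proof (rule approx_closure[OF good_frac])
  fix e :: real assume e: "e > 0"
  have e4: "e / 4 > 0" using e by simp
  obtain n where n: "Q m (\<lambda>x. frac x - psi n x) < e / 4"
    using frac_psi_lim[of m, THEN LIMSEQ_D, OF e4] Q_nonneg by fastforce
  obtain K :: nat where K: "Q m (\<lambda>x. indicator {real K..} x) < e / 4"
    using tail_lim[of m, THEN LIMSEQ_D, OF e4] Q_nonneg by fastforce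
  let ?h = "\<lambda>x. theta n (real K + 1) (x powr (-1/4))"
  have hx: "?h x = psi n x * chi (real K + 1) x" if "x > 1" for x
  proof -
    have "(x powr (-1/4)) ^ 4 = x powr (-1)"
      using that by (simp add: powr_realpow[symmetric] powr_powr)
    then have "1 / (x powr (-1/4)) ^ 4 = x" using that by (simp add: powr_minus_divide)
    then show ?thesis unfolding theta_def by simp
  qed
  have gchi: "good (chi (real K + 1))"
  proof (rule good_bounded[of _ 1])
    show "chi (real K + 1) \<in> borel_measurable borel" unfolding chi_def[abs_def] by measurable
  qed (auto simp: chi_def)
  have gh: "good ?h"
  proof (rule good_bounded[of _ 1])
    show "?h \<in> borel_measurable borel"
      using borel_measurable_continuous_onI[OF theta_cont[of n "real K + 1"]] by measurable
    fix x :: real assume x: "x > 1"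
    have "\<bar>psi n x\<bar> \<le> 1" "\<bar>chi (real K + 1) x\<bar> \<le> 1"
      using psi_bounds[of n x] frac_lt_1[of x] by (auto simp: chi_def)
    then show "\<bar>?h x\<bar> \<le> 1" unfolding hx[OF x] abs_mult by (metis abs_ge_zero mult_le_one)
  qed
  have ah: "approx m ?h" by (rule approx_weierstrass[OF theta_cont])
  have "Q m (\<lambda>x. frac x - ?h x) = Q m (\<lambda>x. (frac x - psi n x) + psi n x * (1 - chi (real K + 1) x))"
    unfolding Q_def IP_def
  proof (rule sint_cong)
    fix x :: real assume x: "x > 1"
    show "(frac x - ?h x) * (frac x - ?h x) * ln x ^ m / x\<^sup>2 =
      (frac x - psi n x + psi n x * (1 - chi (real K + 1) x)) * (frac x - psi n x + psi n x * (1 - chi (real K + 1) x)) * ln x ^ m / x\<^sup>2"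
      unfolding hx[OF x] by (simp add: algebra_simps)
  qed
  also have "\<dots> \<le> 2 * Q m (\<lambda>x. frac x - psi n x) + 2 * Q m (\<lambda>x. psi n x * (1 - chi (real K + 1) x))"
    by (intro Q_add_le good_diff good_mult good_frac good_psi good_const gchi)
  also have "Q m (\<lambda>x. psi n x * (1 - chi (real K + 1) x)) \<le> Q m (\<lambda>x. indicator {real K..} x)"
  proof (rule Q_mono)
    show "good (\<lambda>x. psi n x * (1 - chi (real K + 1) x))" by (intro good_mult good_diff good_psi good_const gchi)
    show "good (\<lambda>x. indicator {real K..} x)" by (rule good_bounded[of _ 1]) (auto simp: indicator_def)
    fix x :: real
    have p: "0 \<le> psi n x" "psi n x \<le> 1" using psi_bounds[of n x] frac_lt_1[of x] by auto
    show "\<bar>psi n x * (1 - chi (real K + 1) x)\<bar> \<le> \<bar>indicator {real K..} x\<bar>"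
    proof (cases "x \<ge> real K")
      case True
      have "0 \<le> 1 - chi (real K + 1) x" "1 - chi (real K + 1) x \<le> 1" by (auto simp: chi_def)
      then have "\<bar>psi n x * (1 - chi (real K + 1) x)\<bar> \<le> 1" using p
        by (simp add: abs_mult mult_le_one)
      then show ?thesis using True by (simp add: indicator_def)
    next
      case False
      then have "chi (real K + 1) x = 1" by (simp add: chi_def)
      then show ?thesis by simp
    qed
  qed
  finally have "Q m (\<lambda>x. frac x - ?h x) < e" using n K by linarith
  then show "\<exists>h. good h \<and> approx m h \<and> Q m (\<lambda>x. frac x - h x) < e" using gh ah by blast
qed


definition lc :: "nat \<Rightarrow> nat \<Rightarrow> nat \<Rightarrow> real" where
  "lc n m k = real ((n + m) choose (n - k)) * (-1) ^ k / fact k"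

definition Lp :: "nat \<Rightarrow> nat \<Rightarrow> real poly" where
  "Lp n m = (\<Sum>k=0..n. monom (lc n m k) k)"

lemma poly_Lp: "poly (Lp n m) u = laguerre n m u"
  unfolding Lp_def laguerre_def lc_def by (simp add: poly_sum poly_monom)

lemma coeff_Lp: "coeff (Lp n m) j = (if j \<le> n then lc n m j else 0)"
  unfolding Lp_def coeff_sum by (auto simp: sum.delta)

lemma degree_Lp: "degree (Lp n m) \<le> n"
  unfolding Lp_def by (intro degree_sum_le) (auto intro: order.trans[OF degree_monom_le])

lemma lc_top: "lc n m n \<noteq> 0"
  unfolding lc_def by simp

lemma basis:
  fixes p :: "real poly"
  assumes "degree p \<le> N"
  shows "\<exists>b. p = (\<Sum>k\<le>N. smult (b k) (Lp k m))"
  using assms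
proof (induction N arbitrary: p)
  case 0
  then have "degree p = 0" by simp
  then have "p = [:coeff p 0:]" by (metis degree_0_id)
  moreover have "Lp 0 m = 1" unfolding Lp_def lc_def by (simp add: monom_0 one_pCons)
  ultimately show ?case by (intro exI[of _ "\<lambda>k. coeff p 0"]) (simp add: smult_one)
next
  case (Suc N)
  define c where "c = coeff p (Suc N) / lc (Suc N) m (Suc N)"
  define p' where "p' = p - smult c (Lp (Suc N) m)"
  have d1: "degree p' \<le> Suc N" unfolding p'_def
    using Suc.prems degree_Lp[of "Suc N" m] by (intro degree_diff_le) (auto intro: order.trans[OF degree_smult_le])
  have c0: "coeff p' (Suc N) = 0" unfolding p'_def c_def using lc_top[of "Suc N" m] by (simp add: coeff_Lp)
  have "degree p' \<le> N"
  proof (rule ccontr)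
    assume "\<not> degree p' \<le> N"
    then have "degree p' = Suc N" using d1 by simp
    then have "p' = 0" using c0 by (metis leading_coeff_0_iff)
    then show False using \<open>degree p' = Suc N\<close> by simp
  qed
  from Suc.IH[OF this] obtain b where b: "p' = (\<Sum>k\<le>N. smult (b k) (Lp k m))" by blast
  have "p = p' + smult c (Lp (Suc N) m)" unfolding p'_def by simp
  also have "\<dots> = (\<Sum>k\<le>Suc N. smult ((b(Suc N := c)) k) (Lp k m))"
    unfolding b by simp
  finally show ?case by blast
qed

lemma basis_poly:
  fixes p :: "real poly"
  assumes "degree p < N"
  shows "\<exists>b. \<forall>u. poly p u = (\<Sum>k<N. b k * laguerre k m u)"
proof -
  obtain N' where N: "N = Suc N'" using assms by (cases N) auto
  obtain b where "p = (\<Sum>k\<le>N'. smult (b k) (Lp k m))" using basis[of p N' m] assms N by auto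
  then have "poly p u = (\<Sum>k<N. b k * laguerre k m u)" for u
    unfolding N lessThan_Suc_atMost by (simp add: poly_sum poly_Lp)
  then show ?thesis by blast
qed


lemma pascal_sum:
  fixes F :: "nat \<Rightarrow> real"
  shows "(\<Sum>i\<le>Suc k. real (Suc k choose i) * (-1)^i * F i)
       = (\<Sum>i\<le>k. real (k choose i) * (-1)^i * F i) - (\<Sum>i\<le>k. real (k choose i) * (-1)^i * F (Suc i))"
proof -
  have A: "(\<Sum>i\<le>Suc k. real (Suc k choose i) * (-1)^i * F i)
      = F 0 + (\<Sum>i\<le>k. real (Suc k choose Suc i) * (-1)^(Suc i) * F (Suc i))"
    by (subst sum.atMost_Suc_shift) simp
  also have "\<dots> = F 0 - (\<Sum>i\<le>k. real (k choose Suc i) * (-1)^i * F (Suc i))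
                      - (\<Sum>i\<le>k. real (k choose i) * (-1)^i * F (Suc i))"
    by (simp add: sum_subtractf sum.distrib algebra_simps sum_negf)
  also have "F 0 - (\<Sum>i\<le>k. real (k choose Suc i) * (-1)^i * F (Suc i)) = (\<Sum>i\<le>k. real (k choose i) * (-1)^i * F i)"
  proof (cases k)
    case 0 then show ?thesis by simp
  next
    case (Suc k')
    have "(\<Sum>i\<le>k. real (k choose i) * (-1)^i * F i)
        = F 0 + (\<Sum>i\<le>k'. real (k choose Suc i) * (-1)^(Suc i) * F (Suc i))"
      unfolding Suc by (subst sum.atMost_Suc_shift) simp
    also have "(\<Sum>i\<le>k'. real (k choose Suc i) * (-1)^(Suc i) * F (Suc i))
        = - (\<Sum>i\<le>k. real (k choose Suc i) * (-1)^i * F (Suc i))"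
    proof -
      have z: "(k choose Suc k) = 0" by simp
      have "(\<Sum>i\<le>k. real (k choose Suc i) * (-1)^i * F (Suc i))
          = (\<Sum>i\<le>k'. real (k choose Suc i) * (-1)^i * F (Suc i))"
        unfolding Suc by (simp only: sum.atMost_Suc) (simp add: Suc[symmetric] z)
      then show ?thesis by (simp add: sum_negf[symmetric])
    qed
    finally show ?thesis by simp
  qed
  finally show ?thesis .
qed

definition T :: "nat \<Rightarrow> real \<Rightarrow> nat \<Rightarrow> real" where
  "T k a j = (\<Sum>i\<le>k. real (k choose i) * (-1)^i * pochhammer (a + real i) j)"

lemma T_step: "T (Suc k) a j = T k a j - T k (a + 1) j"
  unfolding T_def by (subst pascal_sum) (simp add: algebra_simps)

lemma T_j0: "T (Suc k) a 0 = 0"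
proof -
  have "T (Suc k) a 0 = (\<Sum>i\<le>Suc k. (-1)^i * real (Suc k choose i))"
    unfolding T_def by (simp add: mult.commute)
  also have "\<dots> = 0" by (rule choose_alternating_sum) simp
  finally show ?thesis .
qed

lemma T_Sucj: "T k a (Suc j) - T k (a + 1) (Suc j) = - (real j + 1) * T k (a + 1) j"
proof -
  have p: "pochhammer (a + real i) (Suc j) - pochhammer (a + 1 + real i) (Suc j)
        = - (real j + 1) * pochhammer (a + 1 + real i) j" for i
  proof -
    have "pochhammer (a + real i) (Suc j) = (a + real i) * pochhammer (a + real i + 1) j"
      by (rule pochhammer_rec)
    moreover have "pochhammer (a + 1 + real i) (Suc j) = pochhammer (a + 1 + real i) j * (a + 1 + real i + real j)"
      by (rule pochhammer_Suc)
    ultimately show ?thesis by (simp add: algebra_simps)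
  qed
  have "T k a (Suc j) - T k (a + 1) (Suc j) =
      (\<Sum>i\<le>k. real (k choose i) * (-1)^i * (pochhammer (a + real i) (Suc j) - pochhammer (a + 1 + real i) (Suc j)))"
    unfolding T_def by (simp add: sum_subtractf algebra_simps)
  also have "\<dots> = - (real j + 1) * T k (a + 1) j"
    unfolding p T_def by (simp add: sum_distrib_left algebra_simps)
  finally show ?thesis .
qed

lemma T_val: "(j < k \<longrightarrow> T k a j = 0) \<and> T k a k = (-1)^k * fact k"
proof (induction k arbitrary: a j)
  case 0 then show ?case by (simp add: T_def)
next
  case (Suc k)
  have lt: "T (Suc k) a j = 0" if "j < Suc k" for j
  proof (cases j)
    case 0 then show ?thesis using T_j0 by simp
  next
    case (Suc j')
    then have "T (Suc k) a j = - (real j' + 1) * T k (a + 1) j'" using T_step T_Sucj by simp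
    also have "T k (a + 1) j' = 0" using Suc.IH[where a="a+1" and j=j'] that Suc by simp
    finally show ?thesis by simp
  qed
  have "T (Suc k) a (Suc k) = - (real k + 1) * T k (a + 1) k" using T_step T_Sucj by simp
  also have "\<dots> = (-1) ^ Suc k * fact (Suc k)" using Suc.IH[where a="a+1" and j=k] by (simp add: algebra_simps)
  finally show ?case using lt by blast
qed

lemma lag_mom:
  "set_lebesgue_integral lborel {1<..} (\<lambda>x::real. laguerre k m (ln x) * ln x ^ j * ln x ^ m / x\<^sup>2)
    = (\<Sum>i=0..k. lc k m i * fact (i + j + m))"
proof -
  have "set_lebesgue_integral lborel {1<..} (\<lambda>x::real. laguerre k m (ln x) * ln x ^ j * ln x ^ m / x\<^sup>2)
      = set_lebesgue_integral lborel {1<..} (\<lambda>x::real. \<Sum>i=0..k. lc k m i * (ln x ^ (i + j + m) / x\<^sup>2))"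
  proof (rule sint_cong)
    fix x :: real
    have "laguerre k m (ln x) * ln x ^ j * ln x ^ m / x\<^sup>2 = (\<Sum>i=0..k. lc k m i * ln x ^ i) * (ln x ^ j * ln x ^ m / x\<^sup>2)"
      unfolding laguerre_def lc_def by simp
    also have "\<dots> = (\<Sum>i=0..k. lc k m i * ln x ^ i * (ln x ^ j * ln x ^ m / x\<^sup>2))"
      by (rule sum_distrib_right)
    also have "\<dots> = (\<Sum>i=0..k. lc k m i * (ln x ^ (i + j + m) / x\<^sup>2))"
      by (intro sum.cong refl) (simp add: power_add)
    finally show "laguerre k m (ln x) * ln x ^ j * ln x ^ m / x\<^sup>2 = (\<Sum>i=0..k. lc k m i * (ln x ^ (i + j + m) / x\<^sup>2))" .
  qed
  also have "\<dots> = (\<Sum>i=0..k. lc k m i * fact (i + j + m))"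
    by (subst set_integral_sum') (rule set_integrable_mult_right, rule moment(1), simp only: set_integral_mult_right moment(2))
  finally show ?thesis .
qed

lemma lag_mom_val: "(\<Sum>i=0..k. lc k m i * fact (i + j + m)) = fact (k + m) / fact k * T k (real m + 1) j"
proof -
  have "lc k m i * fact (i + j + m) = fact (k + m) / fact k * (real (k choose i) * (-1)^i * pochhammer (real m + 1 + real i) j)"
    if i: "i \<le> k" for i
  proof -
    have f: "fact (i + j + m) = fact (m + i) * pochhammer (real m + 1 + real i) j"
    proof -
      have "(fact (m + i + j) :: real) = pochhammer 1 (m + i + j)" by (rule pochhammer_fact)
      also have "\<dots> = pochhammer 1 (m + i) * pochhammer (1 + real (m + i)) j" by (rule pochhammer_product')
      also have "pochhammer 1 (m + i) = (fact (m + i) :: real)" by (rule pochhammer_fact[symmetric])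
      finally show ?thesis by (simp add: algebra_simps)
    qed
    have b1: "real ((k + m) choose (k - i)) = fact (k + m) / (fact (k - i) * fact (m + i))"
      using i by (subst binomial_fact) (auto simp: algebra_simps)
    have b2: "real (k choose i) = fact k / (fact i * fact (k - i))"
      using i by (rule binomial_fact)
    show ?thesis unfolding lc_def f b1 b2 by (simp add: field_simps)
  qed
  then have "(\<Sum>i=0..k. lc k m i * fact (i + j + m))
      = (\<Sum>i=0..k. fact (k + m) / fact k * (real (k choose i) * (-1)^i * pochhammer (real m + 1 + real i) j))"
    by (intro sum.cong) auto
  also have "\<dots> = fact (k + m) / fact k * T k (real m + 1) j"
    unfolding T_def by (simp add: sum_distrib_left atLeast0AtMost)
  finally show ?thesis .
qed

lemma orth_le:
  assumes "l \<le> k"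
  shows "IP m (\<lambda>x. laguerre k m (ln x)) (\<lambda>x. laguerre l m (ln x)) = (if k = l then fact (k + m) / fact k else 0)"
proof -
  have "IP m (\<lambda>x. laguerre k m (ln x)) (\<lambda>x. laguerre l m (ln x))
      = set_lebesgue_integral lborel {1<..}
          (\<lambda>x::real. \<Sum>j=0..l. lc l m j * (laguerre k m (ln x) * ln x ^ j * ln x ^ m / x\<^sup>2))"
    unfolding IP_def
    by (rule sint_cong) (simp add: laguerre_def[of l] lc_def sum_distrib_left sum_distrib_right sum_divide_distrib algebra_simps)
  also have "\<dots> = (\<Sum>j=0..l. lc l m j * (fact (k + m) / fact k * T k (real m + 1) j))"
  proof (subst set_integral_sum')
    show "set_integrable lborel {1<..} (\<lambda>x::real. lc l m j * (laguerre k m (ln x) * ln x ^ j * ln x ^ m / x\<^sup>2))" for j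
      using int_good[OF good_mult[OF good_mult[OF good_laguerre[of k m] good_lnpow[of j]] good_lnpow[of m]]]
      by (intro set_integrable_mult_right) simp
  qed (simp only: set_integral_mult_right lag_mom lag_mom_val)
  also have "\<dots> = (if k = l then fact (k + m) / fact k else 0)"
  proof (cases "l = k")
    case False
    then have "\<And>j. j \<in> {0..l} \<Longrightarrow> T k (real m + 1) j = 0" using assms T_val by auto
    then show ?thesis using False by simp
  next
    case True
    have "(\<Sum>j=0..k. lc k m j * (fact (k + m) / fact k * T k (real m + 1) j))
        = (\<Sum>j\<in>{k}. lc k m j * (fact (k + m) / fact k * T k (real m + 1) j))"
      by (rule sum.mono_neutral_right) (auto simp: T_val)
    also have "\<dots> = fact (k + m) / fact k"
      using T_val[of k k "real m + 1"] by (simp add: lc_def)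
    finally show ?thesis using True by simp
  qed
  finally show ?thesis .
qed

lemma orth:
  "IP m (\<lambda>x. laguerre k m (ln x)) (\<lambda>x. laguerre l m (ln x)) = (if k = l then fact (k + m) / fact k else 0)"
proof (cases "l \<le> k")
  case True then show ?thesis by (rule orth_le)
next
  case False
  have "IP m (\<lambda>x. laguerre k m (ln x)) (\<lambda>x. laguerre l m (ln x)) = IP m (\<lambda>x. laguerre l m (ln x)) (\<lambda>x. laguerre k m (ln x))"
    unfolding IP_def by (rule sint_cong) (simp add: mult.commute)
  also have "\<dots> = 0" using orth_le[of k l m] False by simp
  finally show ?thesis using False by simp
qed


lemma sq_expand_alg:
  fixes F c :: real and G b :: "'a \<Rightarrow> real"
  shows "(F - (\<Sum>k\<in>I. b k * G k)) * (F - (\<Sum>k\<in>I. b k * G k)) * c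
       = F * F * c - 2 * (\<Sum>k\<in>I. b k * (F * G k * c)) + (\<Sum>k\<in>I. \<Sum>l\<in>I. b k * b l * (G k * G l * c))"
proof -
  define S where "S = (\<Sum>k\<in>I. b k * G k)"
  have 1: "(\<Sum>k\<in>I. b k * (F * G k * c)) = F * S * c"
    unfolding S_def by (simp add: sum_distrib_left sum_distrib_right algebra_simps)
  have ss: "S * S = (\<Sum>k\<in>I. \<Sum>l\<in>I. (b k * G k) * (b l * G l))"
    unfolding S_def by (rule sum_product)
  have "S * S * c = (\<Sum>k\<in>I. \<Sum>l\<in>I. (b k * G k) * (b l * G l) * c)"
    by (simp only: ss sum_distrib_right)
  then have 2: "(\<Sum>k\<in>I. \<Sum>l\<in>I. b k * b l * (G k * G l * c)) = S * S * c"
    by (simp add: algebra_simps)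
  show ?thesis unfolding S_def[symmetric] 1 2 by (simp add: algebra_simps)
qed

lemma sint_sum_mult:
  fixes h :: "'i \<Rightarrow> real \<Rightarrow> real"
  assumes "\<And>k. set_integrable lborel {1<..} (h k)"
  shows "set_integrable lborel {1<..} (\<lambda>x. \<Sum>k\<in>I. c k * h k x)"
    and "set_lebesgue_integral lborel {1<..} (\<lambda>x. \<Sum>k\<in>I. c k * h k x)
         = (\<Sum>k\<in>I. c k * set_lebesgue_integral lborel {1<..} (h k))"
proof -
  have i: "set_integrable lborel {1<..} (\<lambda>x. c k * h k x)" for k
    by (rule set_integrable_mult_right) (rule assms)
  show "set_integrable lborel {1<..} (\<lambda>x. \<Sum>k\<in>I. c k * h k x)"
    by (rule set_integrable_sum') (rule i)
  show "set_lebesgue_integral lborel {1<..} (\<lambda>x. \<Sum>k\<in>I. c k * h k x)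
         = (\<Sum>k\<in>I. c k * set_lebesgue_integral lborel {1<..} (h k))"
    by (subst set_integral_sum') (rule i, simp only: set_integral_mult_right)
qed

lemma Q_expand:
  assumes f: "good f" and g: "\<And>k. good (g k)"
  shows "Q m (\<lambda>x. f x - (\<Sum>k\<in>I. b k * g k x))
    = Q m f - 2 * (\<Sum>k\<in>I. b k * IP m f (g k)) + (\<Sum>k\<in>I. \<Sum>l\<in>I. b k * b l * IP m (g k) (g l))"
proof -
  have iA: "set_integrable lborel {1<..} (\<lambda>x. f x * f x * ln x ^ m / x\<^sup>2)" by (intro int_IP f)
  have iB: "set_integrable lborel {1<..} (\<lambda>x. \<Sum>k\<in>I. b k * (f x * g k x * ln x ^ m / x\<^sup>2))"
    by (intro set_integrable_sum' set_integrable_mult_right int_IP f g)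
  have iB2: "set_integrable lborel {1<..} (\<lambda>x. 2 * (\<Sum>k\<in>I. b k * (f x * g k x * ln x ^ m / x\<^sup>2)))"
    by (intro set_integrable_mult_right iB)
  have iC: "set_integrable lborel {1<..} (\<lambda>x. \<Sum>k\<in>I. \<Sum>l\<in>I. b k * b l * (g k x * g l x * ln x ^ m / x\<^sup>2))"
    by (intro set_integrable_sum' set_integrable_mult_right int_IP g)
  have "Q m (\<lambda>x. f x - (\<Sum>k\<in>I. b k * g k x)) = set_lebesgue_integral lborel {1<..}
     (\<lambda>x. f x * f x * ln x ^ m / x\<^sup>2 - 2 * (\<Sum>k\<in>I. b k * (f x * g k x * ln x ^ m / x\<^sup>2))
           + (\<Sum>k\<in>I. \<Sum>l\<in>I. b k * b l * (g k x * g l x * ln x ^ m / x\<^sup>2)))"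
    unfolding Q_def IP_def
  proof (rule sint_cong)
    fix x :: real
    show "(f x - (\<Sum>k\<in>I. b k * g k x)) * (f x - (\<Sum>k\<in>I. b k * g k x)) * ln x ^ m / x\<^sup>2 =
      f x * f x * ln x ^ m / x\<^sup>2 - 2 * (\<Sum>k\<in>I. b k * (f x * g k x * ln x ^ m / x\<^sup>2)) +
      (\<Sum>k\<in>I. \<Sum>l\<in>I. b k * b l * (g k x * g l x * ln x ^ m / x\<^sup>2))"
      using sq_expand_alg[of "f x" b "\<lambda>k. g k x" I "ln x ^ m / x\<^sup>2"] by simp
  qed
  also have "\<dots> = Q m f - 2 * (\<Sum>k\<in>I. b k * IP m f (g k)) + (\<Sum>k\<in>I. \<Sum>l\<in>I. b k * b l * IP m (g k) (g l))"
  proof -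
    have eB: "set_lebesgue_integral lborel {1<..} (\<lambda>x. \<Sum>k\<in>I. b k * (f x * g k x * ln x ^ m / x\<^sup>2))
        = (\<Sum>k\<in>I. b k * IP m f (g k))"
      unfolding IP_def by (rule sint_sum_mult(2)) (intro int_IP f g)
    have iCk: "set_integrable lborel {1<..} (\<lambda>x. \<Sum>l\<in>I. (b k * b l) * (g k x * g l x * ln x ^ m / x\<^sup>2))" for k
      by (rule sint_sum_mult(1)) (intro int_IP g)
    have eCk: "set_lebesgue_integral lborel {1<..} (\<lambda>x. \<Sum>l\<in>I. (b k * b l) * (g k x * g l x * ln x ^ m / x\<^sup>2))
        = (\<Sum>l\<in>I. b k * b l * IP m (g k) (g l))" for k
      unfolding IP_def by (rule sint_sum_mult(2)) (intro int_IP g)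
    have eC0: "set_lebesgue_integral lborel {1<..} (\<lambda>x. \<Sum>k\<in>I. 1 * (\<Sum>l\<in>I. (b k * b l) * (g k x * g l x * ln x ^ m / x\<^sup>2)))
        = (\<Sum>k\<in>I. 1 * set_lebesgue_integral lborel {1<..} (\<lambda>x. \<Sum>l\<in>I. (b k * b l) * (g k x * g l x * ln x ^ m / x\<^sup>2)))"
      by (rule sint_sum_mult(2)[of "\<lambda>k x. \<Sum>l\<in>I. (b k * b l) * (g k x * g l x * ln x ^ m / x\<^sup>2)"]) (rule iCk)
    have eC: "set_lebesgue_integral lborel {1<..} (\<lambda>x. \<Sum>k\<in>I. \<Sum>l\<in>I. b k * b l * (g k x * g l x * ln x ^ m / x\<^sup>2))
        = (\<Sum>k\<in>I. \<Sum>l\<in>I. b k * b l * IP m (g k) (g l))"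
      using eC0 unfolding mult_1 eCk .
    show ?thesis
      unfolding set_integral_add(2)[OF set_integral_diff(1)[OF iA iB2] iC] set_integral_diff(2)[OF iA iB2]
        set_integral_mult_right eB eC
      unfolding Q_def IP_def ..
  qed
  finally show ?thesis .
qed


lemma IP_frac_L:
  "IP m frac (\<lambda>x. laguerre k m (ln x)) = fact (k + m) / fact k * (- ((-1) ^ k) * ell k m)"
proof -
  have e: "IP m frac (\<lambda>x. laguerre k m (ln x)) = set_lebesgue_integral lborel {1<..}
             (\<lambda>x::real. frac x * ln x ^ m * laguerre k m (ln x) / x ^ 2)"
    unfolding IP_def by (rule sint_cong) (simp add: algebra_simps)
  have b: "fact m * real ((k + m) choose m) = fact (k + m) / fact k"
    by (subst binomial_fact) (auto simp: field_simps)
  have nz: "fact m * real ((k + m) choose m) \<noteq> 0" by simp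
  from conj2[of m k] show ?thesis unfolding e b[symmetric] using nz by (simp add: field_simps)
qed

lemma E_expand:
  fixes b :: "nat \<Rightarrow> real"
  shows "Q m (\<lambda>x. frac x - (\<Sum>k<N. b k * laguerre k m (ln x)))
     = Q m frac - 2 * (\<Sum>k<N. b k * (fact (k + m) / fact k * (- ((-1) ^ k) * ell k m)))
       + (\<Sum>k<N. b k * b k * (fact (k + m) / fact k))"
proof -
  have "Q m (\<lambda>x. frac x - (\<Sum>k<N. b k * laguerre k m (ln x)))
     = Q m frac - 2 * (\<Sum>k<N. b k * IP m frac (\<lambda>x. laguerre k m (ln x)))
       + (\<Sum>k<N. \<Sum>l<N. b k * b l * IP m (\<lambda>x. laguerre k m (ln x)) (\<lambda>x. laguerre l m (ln x)))"
    by (rule Q_expand[where g = "\<lambda>k x. laguerre k m (ln x)"]) (intro good_frac good_laguerre)+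
  also have "(\<Sum>k<N. \<Sum>l<N. b k * b l * IP m (\<lambda>x. laguerre k m (ln x)) (\<lambda>x. laguerre l m (ln x)))
      = (\<Sum>k<N. b k * b k * (fact (k + m) / fact k))"
  proof (rule sum.cong[OF refl])
    fix k assume k: "k \<in> {..<N}"
    have "(\<Sum>l<N. b k * b l * IP m (\<lambda>x. laguerre k m (ln x)) (\<lambda>x. laguerre l m (ln x)))
        = (\<Sum>l<N. if k = l then b k * b k * (fact (k + m) / fact k) else 0)"
      by (rule sum.cong[OF refl]) (simp add: orth)
    also have "\<dots> = b k * b k * (fact (k + m) / fact k)" using k by (simp add: sum.delta)
    finally show "(\<Sum>l<N. b k * b l * IP m (\<lambda>x. laguerre k m (ln x)) (\<lambda>x. laguerre l m (ln x)))
        = b k * b k * (fact (k + m) / fact k)" .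
  qed
  finally show ?thesis unfolding IP_frac_L .
qed

lemma E_min:
  fixes b :: "nat \<Rightarrow> real"
  shows "Q m (\<lambda>x. frac x - (\<Sum>k<N. (- ((-1) ^ k) * ell k m) * laguerre k m (ln x)))
      \<le> Q m (\<lambda>x. frac x - (\<Sum>k<N. b k * laguerre k m (ln x)))"
proof -
  define c where "c k = - ((-1) ^ k) * ell k m" for k
  define h where "h k = (fact (k + m) / fact k :: real)" for k
  have "Q m (\<lambda>x. frac x - (\<Sum>k<N. b k * laguerre k m (ln x)))
      - Q m (\<lambda>x. frac x - (\<Sum>k<N. c k * laguerre k m (ln x)))
      = (\<Sum>k<N. h k * (b k - c k)\<^sup>2)"
    unfolding E_expand c_def[symmetric] h_def[symmetric]
    by (simp add: sum_subtractf[symmetric] sum_distrib_left power2_eq_square algebra_simps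
          sum.distrib[symmetric])
  moreover have "(\<Sum>k<N. h k * (b k - c k)\<^sup>2) \<ge> 0"
    by (intro sum_nonneg mult_nonneg_nonneg) (auto simp: h_def)
  ultimately show ?thesis unfolding c_def by simp
qed

lemma E_lim: "(\<lambda>N. Q m (\<lambda>x. frac x - (\<Sum>k<N. (- ((-1) ^ k) * ell k m) * laguerre k m (ln x)))) \<longlonglongrightarrow> 0"
proof (rule LIMSEQ_I)
  fix r :: real assume r: "r > 0"
  obtain p where p: "Q m (\<lambda>x. frac x - poly p (ln x)) < r"
    using approx_frac[of m] r unfolding approx_def by blast
  show "\<exists>no. \<forall>n\<ge>no. norm (Q m (\<lambda>x. frac x - (\<Sum>k<n. (- ((-1) ^ k) * ell k m) * laguerre k m (ln x))) - 0) < r"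
  proof (intro exI allI impI)
    fix n assume n: "n \<ge> Suc (degree p)"
    then obtain b where b: "\<And>u. poly p u = (\<Sum>k<n. b k * laguerre k m u)"
      using basis_poly[of p n m] by auto
    have "Q m (\<lambda>x. frac x - (\<Sum>k<n. (- ((-1) ^ k) * ell k m) * laguerre k m (ln x)))
        \<le> Q m (\<lambda>x. frac x - (\<Sum>k<n. b k * laguerre k m (ln x)))" by (rule E_min)
    also have "\<dots> = Q m (\<lambda>x. frac x - poly p (ln x))" unfolding b ..
    finally have "Q m (\<lambda>x. frac x - (\<Sum>k<n. (- ((-1) ^ k) * ell k m) * laguerre k m (ln x))) < r"
      using p by linarith
    then show "norm (Q m (\<lambda>x. frac x - (\<Sum>k<n. (- ((-1) ^ k) * ell k m) * laguerre k m (ln x))) - 0) < r"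
      using Q_nonneg by simp
  qed
qed

theorem mainTheorem9:
  fixes m n :: nat
  shows "set_integrable lborel {1<..}
           (\<lambda>x::real. frac x * ln x ^ m * laguerre n m (ln x) / x ^ 2)
       \<and> (1 / (fact m * real ((n + m) choose m))) *
           set_lebesgue_integral lborel {1<..}
             (\<lambda>x::real. frac x * ln x ^ m * laguerre n m (ln x) / x ^ 2)
         = - ((-1) ^ n) * ell n m
       \<and> set_integrable lborel {1<..}
           (\<lambda>x::real. (frac x)\<^sup>2 * ln x ^ m / (fact m * x ^ 2))
       \<and> (\<lambda>N. set_lebesgue_integral lborel {1<..}
             (\<lambda>x::real. (frac x - (\<Sum>k<N. - ((-1) ^ k) * ell k m * laguerre k m (ln x)))\<^sup>2
                        * ln x ^ m / (fact m * x ^ 2)))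
         \<longlonglongrightarrow> 0"
proof (intro conjI)
  show "set_integrable lborel {1<..} (\<lambda>x::real. frac x * ln x ^ m * laguerre n m (ln x) / x ^ 2)"
    by (rule conj1)
  show "(1 / (fact m * real ((n + m) choose m))) *
           set_lebesgue_integral lborel {1<..}
             (\<lambda>x::real. frac x * ln x ^ m * laguerre n m (ln x) / x ^ 2)
         = - ((-1) ^ n) * ell n m" by (rule conj2)
  have eqf: "(\<lambda>x::real. (frac x)\<^sup>2 * ln x ^ m / (fact m * x ^ 2)) = (\<lambda>x. (frac x * frac x * ln x ^ m / x\<^sup>2) / fact m)"
    by (rule ext) (simp add: power2_eq_square divide_divide_eq_left mult.commute)
  show "set_integrable lborel {1<..} (\<lambda>x::real. (frac x)\<^sup>2 * ln x ^ m / (fact m * x ^ 2))"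
    unfolding eqf by (intro set_integrable_divide int_IP good_frac)
  have "(\<lambda>N. Q m (\<lambda>x. frac x - (\<Sum>k<N. (- ((-1) ^ k) * ell k m) * laguerre k m (ln x))) / fact m) \<longlonglongrightarrow> 0 / fact m"
    by (intro tendsto_divide E_lim) auto
  moreover have "set_lebesgue_integral lborel {1<..}
             (\<lambda>x::real. (frac x - (\<Sum>k<N. - ((-1) ^ k) * ell k m * laguerre k m (ln x)))\<^sup>2
                        * ln x ^ m / (fact m * x ^ 2))
      = Q m (\<lambda>x. frac x - (\<Sum>k<N. (- ((-1) ^ k) * ell k m) * laguerre k m (ln x))) / fact m" for N
    unfolding Q_def IP_def
    by (subst set_integral_divide_zero[symmetric], rule sint_cong)
       (simp add: power2_eq_square divide_divide_eq_left mult.commute)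
  ultimately show "(\<lambda>N. set_lebesgue_integral lborel {1<..}
             (\<lambda>x::real. (frac x - (\<Sum>k<N. - ((-1) ^ k) * ell k m * laguerre k m (ln x)))\<^sup>2
                        * ln x ^ m / (fact m * x ^ 2)))
         \<longlonglongrightarrow> 0" by simp
qed

end
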